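(* The class $\mathcal S^*$ has the expansion property relative to the class $\mathcal S$.
   Context: Expansion property: let $L\subseteq L^*$ be relational languages, $\mathcal K$ a class of finite $L$-structures and $\mathcal K^*$ a class of finite $L^*$-structures whose $L$-reducts lie in $\mathcal K$. $\mathcal K^*$ has the expansion property relative to $\mathcal K$ if for every $\mathbf A\in\mathcal K$ there is $\mathbf B\in\mathcal K$ such that for all $\mathbf A^*,\mathbf B^*\in\mathcal K^*$ whose $L$-reducts are $\mathbf A$ and $\mathbf B$ respectively, $\mathbf A^*$ embeds into $\mathbf B^*$. A directed graph $(A,E)$ is complete multipartite if the relation "$u=v$, or neither $E(u,v)$ nor $E(v,u)$" is an equivalence relation on $A$; its classes are the parts. $\mathcal S$ is the class of finite complete multipartite directed graphs satisfying the parity constraint: for any two distinct parts $P,P'$, distinct $u,v\in P$ and distinct $x,y\in P'$, the number of edges directed from $\{u,v\}$ to $\{x,y\}$ is even. $\mathcal S^*$ is the class of structures $(A,E,R,<)$ ($R,<$ binary) obtained as follows: $\mathbf A=(A,E)\in\mathcal S$ has $k$ parts; choose $\bar{\mathbf A}=(\bar A,\bar E)\in\mathcal S$ with $k$ parts, containing $\mathbf A$ as an induced substructure, and containing a set $\{t_0,\dots,t_{k-1}\}$ disjoint from $A$ with exactly one $t_i$ in each part of $\bar{\mathbf A}$ and $\bar E(t_i,t_j)$ whenever $i<j$; set $R(x,u)$ iff $x,u\in A$ lie in different parts and $\bar E(t,u)$, where $t$ is the $t_i$ lying in the part of $x$; and let $<$ be the restriction to $A$ of a linear order on $\bar A$ in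 which every part of $\bar{\mathbf A}$ is an interval and $t_0<t_1<\dots<t_{k-1}$. *)

theory Defs
  imports Main
begin

text \<open>Structures live on finite subsets of nat (every finite structure has an
isomorphic copy there). Relations are sets of pairs over the carrier.\<close>

definition digraph :: "nat set \<Rightarrow> (nat \<times> nat) set \<Rightarrow> bool" where
  "digraph A E \<longleftrightarrow> E \<subseteq> A \<times> A \<and> (\<forall>x. (x, x) \<notin> E) \<and> (\<forall>x y. (x, y) \<in> E \<longrightarrow> (y, x) \<notin> E)"

definition same_part :: "(nat \<times> nat) set \<Rightarrow> nat \<Rightarrow> nat \<Rightarrow> bool" where
  "same_part E u v \<longleftrightarrow> u = v \<or> ((u, v) \<notin> E \<and> (v, u) \<notin> E)"

definition part_rel :: "nat set \<Rightarrow> (nat \<times> nat) set \<Rightarrow> (nat \<times> nat) set" where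
  "part_rel A E = {(u, v). u \<in> A \<and> v \<in> A \<and> same_part E u v}"

definition complete_multipartite :: "nat set \<Rightarrow> (nat \<times> nat) set \<Rightarrow> bool" where
  "complete_multipartite A E \<longleftrightarrow> digraph A E \<and> equiv A (part_rel A E)"

definition parts :: "nat set \<Rightarrow> (nat \<times> nat) set \<Rightarrow> nat set set" where
  "parts A E = A // part_rel A E"

definition parity_ok :: "nat set \<Rightarrow> (nat \<times> nat) set \<Rightarrow> bool" where
  "parity_ok A E \<longleftrightarrow>
     (\<forall>P \<in> parts A E. \<forall>P' \<in> parts A E. P \<noteq> P' \<longrightarrow>
        (\<forall>u \<in> P. \<forall>v \<in> P. \<forall>x \<in> P'. \<forall>y \<in> P'. u \<noteq> v \<longrightarrow> x \<noteq> y \<longrightarrow>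
           even (card {(a, b). a \<in> {u, v} \<and> b \<in> {x, y} \<and> (a, b) \<in> E})))"

definition in_S :: "nat set \<Rightarrow> (nat \<times> nat) set \<Rightarrow> bool" where
  "in_S A E \<longleftrightarrow> finite A \<and> complete_multipartite A E \<and> parity_ok A E"

definition strict_linorder_on :: "nat set \<Rightarrow> (nat \<times> nat) set \<Rightarrow> bool" where
  "strict_linorder_on X Ord \<longleftrightarrow> Ord \<subseteq> X \<times> X \<and> (\<forall>x. (x, x) \<notin> Ord) \<and>
     (\<forall>x y z. (x, y) \<in> Ord \<longrightarrow> (y, z) \<in> Ord \<longrightarrow> (x, z) \<in> Ord) \<and>
     (\<forall>x \<in> X. \<forall>y \<in> X. x \<noteq> y \<longrightarrow> (x, y) \<in> Ord \<or> (y, x) \<in> Ord)"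

definition in_Sstar :: "nat set \<Rightarrow> (nat \<times> nat) set \<Rightarrow> (nat \<times> nat) set \<Rightarrow> (nat \<times> nat) set \<Rightarrow> bool" where
  "in_Sstar A E R Lt \<longleftrightarrow> in_S A E \<and>
    (\<exists>Ab Eb (t :: nat \<Rightarrow> nat) Ob. let k = card (parts A E) in
       in_S Ab Eb \<and> A \<subseteq> Ab \<and> E = Eb \<inter> (A \<times> A) \<and> card (parts Ab Eb) = k \<and>
       (\<forall>i < k. t i \<in> Ab - A) \<and>
       (\<forall>P \<in> parts Ab Eb. \<exists>!i. i < k \<and> t i \<in> P) \<and>
       (\<forall>i j. i < j \<and> j < k \<longrightarrow> (t i, t j) \<in> Eb) \<and>
       R = {(x, u). x \<in> A \<and> u \<in> A \<and> \<not> same_part Eb x u \<and>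
                    (\<exists>i < k. same_part Eb (t i) x \<and> (t i, u) \<in> Eb)} \<and>
       strict_linorder_on Ab Ob \<and>
       (\<forall>P \<in> parts Ab Eb. \<forall>a \<in> P. \<forall>c \<in> P. \<forall>b \<in> Ab. (a, b) \<in> Ob \<and> (b, c) \<in> Ob \<longrightarrow> b \<in> P) \<and>
       (\<forall>i j. i < j \<and> j < k \<longrightarrow> (t i, t j) \<in> Ob) \<and>
       Lt = Ob \<inter> (A \<times> A))"

definition embeds_star ::
  "nat set \<Rightarrow> (nat \<times> nat) set \<Rightarrow> (nat \<times> nat) set \<Rightarrow> (nat \<times> nat) set \<Rightarrow>
   nat set \<Rightarrow> (nat \<times> nat) set \<Rightarrow> (nat \<times> nat) set \<Rightarrow> (nat \<times> nat) set \<Rightarrow> bool" where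
  "embeds_star A E R Lt B F R' Lt' \<longleftrightarrow>
    (\<exists>f. f ` A \<subseteq> B \<and> inj_on f A \<and>
      (\<forall>x \<in> A. \<forall>y \<in> A.
         ((x, y) \<in> E \<longleftrightarrow> (f x, f y) \<in> F) \<and>
         ((x, y) \<in> R \<longleftrightarrow> (f x, f y) \<in> R') \<and>
         ((x, y) \<in> Lt \<longleftrightarrow> (f x, f y) \<in> Lt')))"

definition Sstar_expansion_property :: bool where
  "Sstar_expansion_property \<longleftrightarrow>
    (\<forall>A E. in_S A E \<longrightarrow>
      (\<exists>B F. in_S B F \<and>
        (\<forall>R Lt R' Lt'. in_Sstar A E R Lt \<longrightarrow> in_Sstar B F R' Lt' \<longrightarrow>
           embeds_star A E R Lt B F R' Lt')))"

end

theory Submission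
  imports Defs "HOL-Library.Ramsey" "HOL-Library.Nat_Bijection"
begin

lemma rank_lemma:
  fixes X :: "'a set" and r :: "'a \<Rightarrow> 'a \<Rightarrow> bool"
  assumes fin: "finite X"
    and irr: "\<forall>x\<in>X. \<not> r x x"
    and tr: "\<forall>x\<in>X. \<forall>y\<in>X. \<forall>z\<in>X. r x y \<longrightarrow> r y z \<longrightarrow> r x z"
    and tot: "\<forall>x\<in>X. \<forall>y\<in>X. x \<noteq> y \<longrightarrow> r x y \<or> r y x"
  shows "bij_betw (\<lambda>x. card {y\<in>X. r y x}) X {..<card X}"
    and "\<And>x y. x \<in> X \<Longrightarrow> y \<in> X \<Longrightarrow> r x y \<longleftrightarrow> card {z\<in>X. r z x} < card {z\<in>X. r z y}"
proof -
  have lt: "card {z\<in>X. r z x} < card {z\<in>X. r z y}" if "x \<in> X" "y \<in> X" "r x y" for x y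
  proof (rule psubset_card_mono)
    show "finite {z\<in>X. r z y}" using fin by simp
    have "{z\<in>X. r z x} \<subseteq> {z\<in>X. r z y}"
    proof
      fix z assume "z \<in> {z\<in>X. r z x}"
      then have "z \<in> X" "r z x" by auto
      then show "z \<in> {z\<in>X. r z y}" using tr that by blast
    qed
    moreover have "x \<in> {z\<in>X. r z y}" "x \<notin> {z\<in>X. r z x}" using that irr by auto
    ultimately show "{z\<in>X. r z x} \<subset> {z\<in>X. r z y}" by blast
  qed
  show ord: "r x y \<longleftrightarrow> card {z\<in>X. r z x} < card {z\<in>X. r z y}" if "x \<in> X" "y \<in> X" for x y
  proof
    assume "r x y" then show "card {z\<in>X. r z x} < card {z\<in>X. r z y}" using lt that by blast
  next
    assume a: "card {z\<in>X. r z x} < card {z\<in>X. r z y}"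
    show "r x y"
    proof (rule ccontr)
      assume "\<not> r x y"
      then have "x = y \<or> r y x" using tot that by blast
      then show False using a lt[of y x] that by auto
    qed
  qed
  have inj: "inj_on (\<lambda>x. card {y\<in>X. r y x}) X"
  proof (rule inj_onI)
    fix x y assume "x \<in> X" "y \<in> X" "card {z\<in>X. r z x} = card {z\<in>X. r z y}"
    then show "x = y" using tot lt[of x y] lt[of y x] by auto
  qed
  have sub: "(\<lambda>x. card {y\<in>X. r y x}) ` X \<subseteq> {..<card X}"
  proof
    fix c assume "c \<in> (\<lambda>x. card {y\<in>X. r y x}) ` X"
    then obtain x where x: "x \<in> X" "c = card {y\<in>X. r y x}" by blast
    have "{y\<in>X. r y x} \<subset> X" using x irr by auto
    then show "c \<in> {..<card X}" using x fin by (simp add: psubset_card_mono)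
  qed
  show "bij_betw (\<lambda>x. card {y\<in>X. r y x}) X {..<card X}"
    unfolding bij_betw_def
  proof
    show "inj_on (\<lambda>x. card {y \<in> X. r y x}) X" by (rule inj)
    show "(\<lambda>x. card {y \<in> X. r y x}) ` X = {..<card X}"
    proof (rule card_subset_eq)
      show "finite {..<card X}" by simp
      show "(\<lambda>x. card {y \<in> X. r y x}) ` X \<subseteq> {..<card X}" by (rule sub)
      show "card ((\<lambda>x. card {y \<in> X. r y x}) ` X) = card {..<card X}"
        using inj by (simp add: card_image)
    qed
  qed
qed

definition shatters :: "nat set set \<Rightarrow> nat set \<Rightarrow> bool" where
  "shatters J Y \<longleftrightarrow> (\<forall>T\<subseteq>Y. \<exists>W\<in>J. W \<inter> Y = T)"

lemma shatters_mono: "shatters J Y \<Longrightarrow> Y' \<subseteq> Y \<Longrightarrow> shatters J Y'"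
  unfolding shatters_def
proof (intro allI impI)
  fix T assume a: "\<forall>T\<subseteq>Y. \<exists>W\<in>J. W \<inter> Y = T" "Y' \<subseteq> Y" "T \<subseteq> Y'"
  then obtain W where "W \<in> J" "W \<inter> Y = T" by blast
  then show "\<exists>W\<in>J. W \<inter> Y' = T" using a by blast
qed

lemma shatters_proj: "shatters ((\<lambda>W. W \<inter> X) ` J) Y \<Longrightarrow> Y \<subseteq> X \<Longrightarrow> shatters J Y"
  unfolding shatters_def
proof (intro allI impI)
  fix T assume a: "\<forall>T\<subseteq>Y. \<exists>W\<in>(\<lambda>W. W \<inter> X) ` J. W \<inter> Y = T" "Y \<subseteq> X" "T \<subseteq> Y"
  then obtain W where "W \<in> J" "(W \<inter> X) \<inter> Y = T" by blast
  moreover have "(W \<inter> X) \<inter> Y = W \<inter> Y" using a(2) by blast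
  ultimately show "\<exists>W\<in>J. W \<inter> Y = T" by auto
qed

lemma pajor:
  assumes "finite X" "J \<subseteq> Pow X"
  shows "card J \<le> card {Y. Y \<subseteq> X \<and> shatters J Y}"
  using assms
proof (induction X arbitrary: J rule: finite_induct)
  case empty
  then have "J \<subseteq> {{}}" by auto
  show ?case
  proof (cases "J = {}")
    case True then show ?thesis by simp
  next
    case False
    then have "J = {{}}" using \<open>J \<subseteq> {{}}\<close> by auto
    then have "{Y. Y \<subseteq> {} \<and> shatters J Y} = {{}}" by (auto simp: shatters_def)
    then show ?thesis using \<open>J = {{}}\<close> by simp
  qed
next
  case (insert x X)
  define J0 where "J0 = {W\<in>J. x \<notin> W}"
  define J1 where "J1 = {W. W \<subseteq> X \<and> insert x W \<in> J}"
  have J0X: "J0 \<subseteq> Pow X" using insert.prems J0_def by auto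
  have J1X: "J1 \<subseteq> Pow X" using J1_def by auto
  have finJ: "finite J" using insert.prems insert.hyps(1) by (metis finite_Pow_iff finite_insert finite_subset)
  have "finite (Pow X)" using insert.hyps by simp
  then have fin0: "finite J0" and fin1: "finite J1" using J0X J1X by (auto intro: finite_subset)
  have cardJ: "card J = card J0 + card J1"
  proof -
    have "J = J0 \<union> {W\<in>J. x \<in> W}" using J0_def by auto
    moreover have "card {W\<in>J. x \<in> W} = card J1"
    proof (rule bij_betw_same_card[of "\<lambda>W. W - {x}"])
      show "bij_betw (\<lambda>W. W - {x}) {W \<in> J. x \<in> W} J1"
        unfolding bij_betw_def inj_on_def J1_def
      proof (intro conjI ballI impI)
        fix W V assume "W \<in> {W \<in> J. x \<in> W}" "V \<in> {W \<in> J. x \<in> W}" "W - {x} = V - {x}"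
        then have "x \<in> W" "x \<in> V" "W - {x} = V - {x}" by auto
        then show "W = V" by (metis insert_Diff)
      next
        show "(\<lambda>W. W - {x}) ` {W \<in> J. x \<in> W} = {W. W \<subseteq> X \<and> insert x W \<in> J}"
        proof
          show "(\<lambda>W. W - {x}) ` {W \<in> J. x \<in> W} \<subseteq> {W. W \<subseteq> X \<and> insert x W \<in> J}"
            using insert.prems by (auto simp: insert_absorb)
          show "{W. W \<subseteq> X \<and> insert x W \<in> J} \<subseteq> (\<lambda>W. W - {x}) ` {W \<in> J. x \<in> W}"
          proof
            fix W assume "W \<in> {W. W \<subseteq> X \<and> insert x W \<in> J}"
            then have "insert x W \<in> {W \<in> J. x \<in> W}" "W = insert x W - {x}" using insert.hyps(2) by auto
            then show "W \<in> (\<lambda>W. W - {x}) ` {W \<in> J. x \<in> W}" by blast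
          qed
        qed
      qed
    qed
    moreover have "J0 \<inter> {W\<in>J. x \<in> W} = {}" using J0_def by auto
    moreover have "finite {W\<in>J. x \<in> W}" using finJ by simp
    ultimately show ?thesis using card_Un_disjoint[OF fin0 \<open>finite {W\<in>J. x \<in> W}\<close>] by simp
  qed
  define U where "U = J0 \<union> J1"
  define I where "I = J0 \<inter> J1"
  have cUI: "card U + card I = card J0 + card J1"
    unfolding U_def I_def using card_Un_Int[OF fin0 fin1] by simp
  have IHU: "card U \<le> card {Y. Y \<subseteq> X \<and> shatters U Y}" proof -
    have "U \<subseteq> Pow X" using J0X J1X U_def by auto
    then show ?thesis by (rule insert.IH)
  qed
  have IHI: "card I \<le> card {Y. Y \<subseteq> X \<and> shatters I Y}" proof -
    have "I \<subseteq> Pow X" using J0X I_def by auto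
    then show ?thesis by (rule insert.IH)
  qed
  define SU where "SU = {Y. Y \<subseteq> X \<and> shatters U Y}"
  define SI where "SI = {Y. Y \<subseteq> X \<and> shatters I Y}"
  have s1: "SU \<subseteq> {Y. Y \<subseteq> insert x X \<and> shatters J Y}"
  proof
    fix Y assume "Y \<in> SU"
    then have Y: "Y \<subseteq> X" "shatters U Y" using SU_def by auto
    have "shatters J Y" unfolding shatters_def
    proof (intro allI impI)
      fix T assume "T \<subseteq> Y"
      then obtain W where W: "W \<in> U" "W \<inter> Y = T" using Y unfolding shatters_def by blast
      show "\<exists>W\<in>J. W \<inter> Y = T"
      proof (cases "W \<in> J0")
        case True then show ?thesis using W J0_def by auto
      next
        case False
        then have "W \<in> J1" using W U_def by auto
        then have "insert x W \<in> J" using J1_def by auto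
        moreover have "insert x W \<inter> Y = T" using W Y insert.hyps(2) by auto
        ultimately show ?thesis by blast
      qed
    qed
    then show "Y \<in> {Y. Y \<subseteq> insert x X \<and> shatters J Y}" using Y by auto
  qed
  have s2: "insert x ` SI \<subseteq> {Y. Y \<subseteq> insert x X \<and> shatters J Y}"
  proof
    fix Z assume "Z \<in> insert x ` SI"
    then obtain Y where Y: "Y \<subseteq> X" "shatters I Y" "Z = insert x Y" using SI_def by auto
    have "shatters J (insert x Y)" unfolding shatters_def
    proof (intro allI impI)
      fix T assume T: "T \<subseteq> insert x Y"
      then have "T - {x} \<subseteq> Y" by auto
      then obtain W where W: "W \<in> I" "W \<inter> Y = T - {x}" using Y unfolding shatters_def by blast
      have WJ: "W \<in> J" "x \<notin> W" "insert x W \<in> J" using W I_def J0_def J1_def by auto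
      show "\<exists>W\<in>J. W \<inter> insert x Y = T"
      proof (cases "x \<in> T")
        case True
        have "insert x W \<inter> insert x Y = T" using W True T by auto
        then show ?thesis using WJ by blast
      next
        case False
        have "W \<inter> insert x Y = T" using W False WJ T by auto
        then show ?thesis using WJ by blast
      qed
    qed
    then show "Z \<in> {Y. Y \<subseteq> insert x X \<and> shatters J Y}" using Y by auto
  qed
  have disj: "SU \<inter> insert x ` SI = {}" using SU_def insert.hyps(2) by auto
  have injI: "inj_on (insert x) SI"
  proof (rule inj_onI)
    fix Y Y' assume "Y \<in> SI" "Y' \<in> SI" "insert x Y = insert x Y'"
    moreover have "x \<notin> Y" "x \<notin> Y'" using \<open>Y \<in> SI\<close> \<open>Y' \<in> SI\<close> SI_def insert.hyps(2) by auto
    ultimately show "Y = Y'" by (metis Diff_insert_absorb)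
  qed
  have finS: "finite {Y. Y \<subseteq> insert x X \<and> shatters J Y}"
  proof (rule finite_subset)
    show "{Y. Y \<subseteq> insert x X \<and> shatters J Y} \<subseteq> Pow (insert x X)" by auto
    show "finite (Pow (insert x X))" using insert.hyps(1) by simp
  qed
  have fSU: "finite SU" using s1 finS by (rule finite_subset)
  have fSI: "finite (insert x ` SI)" using s2 finS by (rule finite_subset)
  have "card SU + card SI = card SU + card (insert x ` SI)" using injI by (simp add: card_image)
  also have "\<dots> = card (SU \<union> insert x ` SI)" using card_Un_disjoint[OF fSU fSI disj] by simp
  finally have "card SU + card SI = card (SU \<union> insert x ` SI)" .
  also have "\<dots> \<le> card {Y. Y \<subseteq> insert x X \<and> shatters J Y}"
    using s1 s2 finS by (intro card_mono) auto
  finally have "card SU + card SI \<le> card {Y. Y \<subseteq> insert x X \<and> shatters J Y}" .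
  moreover have "card U \<le> card SU" "card I \<le> card SI" using IHU IHI SU_def SI_def by auto
  ultimately show ?case using cardJ cUI by linarith
qed


lemma sq_le_pow2: "4 \<le> j \<Longrightarrow> j^2 \<le> (2::nat)^j"
proof (induction j rule: dec_induct)
  case base then show ?case by simp
next
  case (step n)
  have "(Suc n)^2 = n^2 + 2*n + 1" by (simp add: power2_eq_square)
  also have "\<dots> \<le> n^2 + n^2"
  proof -
    have "4*n \<le> n*n" using step.hyps(1) by (rule mult_le_mono1)
    then have "2*n+1 \<le> n*n" using step.hyps(1) by linarith
    then show ?thesis by (simp add: power2_eq_square)
  qed
  also have "\<dots> \<le> 2^n + 2^n" using step.IH by simp
  finally show ?case by simp
qed

lemma poly_exp: "\<exists>h\<ge>h1. c * (h+1)^K < (2::nat)^h"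
proof -
  define j where "j = max (max 4 (K+2)) (max c h1)"
  define h where "h = (K+1)*j"
  have j4: "4 \<le> j" and jK: "K+2 \<le> j" and jc: "c \<le> j" and jh: "h1 \<le> j" unfolding j_def by auto
  have "h + 1 \<le> j^2"
  proof -
    have "(K+2)*j \<le> j*j" using jK by (rule mult_le_mono1)
    then show ?thesis unfolding h_def power2_eq_square using j4 by (simp add: algebra_simps)
  qed
  also have "\<dots> \<le> 2^j" by (rule sq_le_pow2[OF j4])
  finally have hj: "h + 1 \<le> 2^j" .
  have "c < 2^j" using jc less_exp[of j] by linarith
  then have "c * (h+1)^K < 2^j * (2^j)^K"
  proof -
    have "(h+1)^K \<le> (2^j)^K" using hj by (rule power_mono) simp
    moreover have "(h+1)^K > 0" by simp
    ultimately show ?thesis using \<open>c < 2^j\<close> by (meson mult_less_le_imp_less zero_le)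
  qed
  also have "2^j * (2^j)^K = (2::nat)^h" unfolding h_def by (simp add: power_mult[symmetric] power_add[symmetric] algebra_simps)
  finally have "c * (h+1)^K < 2^h" .
  moreover have "h1 \<le> h" using jh unfolding h_def by (simp add: trans_le_add2)
  ultimately show ?thesis by blast
qed

lemma choose_le_pow: "n choose j \<le> (n+1)^j"
proof (cases "j \<le> n")
  case True
  then have "n choose j \<le> n^j" by (rule binomial_le_pow)
  also have "\<dots> \<le> (n+1)^j" by (rule power_mono) auto
  finally show ?thesis .
next
  case False then show ?thesis by (simp add: binomial_eq_0)
qed

lemma small_card:
  assumes "finite X1" "card X1 = h" "a \<le> K"
  shows "card {Z. Z \<subseteq> X1 \<and> card Z < a} \<le> K * (h+1)^K"
proof -
  have "{Z. Z \<subseteq> X1 \<and> card Z < a} \<subseteq> (\<Union>j\<in>{..<a}. nsets X1 j)"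
    using assms(1) by (auto simp: nsets_def intro: finite_subset)
  then have "card {Z. Z \<subseteq> X1 \<and> card Z < a} \<le> card (\<Union>j\<in>{..<a}. nsets X1 j)"
    by (intro card_mono) (auto simp: finite_imp_finite_nsets assms(1))
  also have "\<dots> \<le> (\<Sum>j\<in>{..<a}. card (nsets X1 j))" by (rule card_UN_le) simp
  also have "\<dots> = (\<Sum>j\<in>{..<a}. h choose j)" using assms by simp
  also have "\<dots> \<le> (\<Sum>j\<in>{..<a}. (h+1)^K)"
  proof (rule sum_mono)
    fix j assume "j \<in> {..<a}"
    then have "j \<le> K" using assms by simp
    have "h choose j \<le> (h+1)^j" by (rule choose_le_pow)
    also have "\<dots> \<le> (h+1)^K" using \<open>j \<le> K\<close> by (intro power_increasing) auto
    finally show "h choose j \<le> (h+1)^K" .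
  qed
  also have "\<dots> = a * (h+1)^K" by simp
  also have "\<dots> \<le> K * (h+1)^K" using assms by simp
  finally show ?thesis .
qed

lemma bad_half_card:
  assumes "finite X1" "finite X2" "card X1 = h" "card X2 = h" "a \<le> K"
  shows "card {Y. Y \<subseteq> X1 \<union> X2 \<and> card (Y \<inter> X1) < a} \<le> K * (h+1)^K * 2^h"
proof -
  define Sm where "Sm = {Z. Z \<subseteq> X1 \<and> card Z < a}"
  have "{Y. Y \<subseteq> X1 \<union> X2 \<and> card (Y \<inter> X1) < a} \<subseteq> (\<lambda>(Z,Z'). Z \<union> Z') ` (Sm \<times> Pow X2)"
  proof
    fix Y assume "Y \<in> {Y. Y \<subseteq> X1 \<union> X2 \<and> card (Y \<inter> X1) < a}"
    then have Y: "Y \<subseteq> X1 \<union> X2" "card (Y \<inter> X1) < a" by auto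
    have "Y = (\<lambda>(Z,Z'). Z \<union> Z') (Y \<inter> X1, Y \<inter> X2)" using Y by auto
    moreover have "(Y \<inter> X1, Y \<inter> X2) \<in> Sm \<times> Pow X2" using Y Sm_def by auto
    ultimately show "Y \<in> (\<lambda>(Z,Z'). Z \<union> Z') ` (Sm \<times> Pow X2)" by blast
  qed
  moreover have fSm: "finite Sm" using assms(1) Sm_def by (auto intro: finite_subset[of _ "Pow X1"])
  ultimately have "card {Y. Y \<subseteq> X1 \<union> X2 \<and> card (Y \<inter> X1) < a} \<le> card ((\<lambda>(Z,Z'). Z \<union> Z') ` (Sm \<times> Pow X2))"
    using assms(2) by (intro card_mono) auto
  also have "\<dots> \<le> card (Sm \<times> Pow X2)" by (rule card_image_le) (use fSm assms(2) in auto)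
  also have "\<dots> = card Sm * 2^h" using assms by (simp add: card_cartesian_product card_Pow)
  also have "\<dots> \<le> K * (h+1)^K * 2^h" using small_card[OF assms(1) assms(3) assms(5)] Sm_def by simp
  finally show ?thesis .
qed

lemma bad_card:
  assumes "finite X1" "finite X2" "card X1 = h" "card X2 = h" "a \<le> K" "b \<le> K"
  shows "card {Y. Y \<subseteq> X1 \<union> X2 \<and> (card (Y \<inter> X1) < a \<or> card (Y \<inter> X2) < b)} \<le> 2 * K * (h+1)^K * 2^h"
proof -
  have eq: "{Y. Y \<subseteq> X1 \<union> X2 \<and> (card (Y \<inter> X1) < a \<or> card (Y \<inter> X2) < b)} =
     {Y. Y \<subseteq> X1 \<union> X2 \<and> card (Y \<inter> X1) < a} \<union> {Y. Y \<subseteq> X2 \<union> X1 \<and> card (Y \<inter> X2) < b}" by auto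
  have f: "finite {Y. Y \<subseteq> X1 \<union> X2 \<and> card (Y \<inter> X1) < a}" "finite {Y. Y \<subseteq> X2 \<union> X1 \<and> card (Y \<inter> X2) < b}"
    using assms(1,2) by (auto intro: finite_subset[of _ "Pow (X1 \<union> X2)"])
  have "card {Y. Y \<subseteq> X1 \<union> X2 \<and> (card (Y \<inter> X1) < a \<or> card (Y \<inter> X2) < b)} \<le>
     card {Y. Y \<subseteq> X1 \<union> X2 \<and> card (Y \<inter> X1) < a} + card {Y. Y \<subseteq> X2 \<union> X1 \<and> card (Y \<inter> X2) < b}"
    unfolding eq by (rule card_Un_le)
  also have "\<dots> \<le> K * (h+1)^K * 2^h + K * (h+1)^K * 2^h"
    using bad_half_card[OF assms(1,2,3,4,5)] bad_half_card[OF assms(2,1,4,3,6)] by (rule add_mono)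
  finally show ?thesis by simp
qed

lemma fiber_card:
  assumes "J \<subseteq> Pow {..<N}" "X \<subseteq> {..<N}"
  shows "card J \<le> card ((\<lambda>W. W \<inter> X) ` J) * 2^(N - card X)"
proof -
  define P where "P = (\<lambda>W. W \<inter> X) ` J"
  have fJ: "finite J" using assms(1) by (rule finite_subset) simp
  have fP: "finite P" using fJ P_def by simp
  have "J \<subseteq> (\<Union>Z\<in>P. (\<lambda>V. Z \<union> V) ` Pow ({..<N} - X))"
  proof
    fix W assume "W \<in> J"
    then have "W = (W \<inter> X) \<union> (W - X)" "W \<inter> X \<in> P" "W - X \<in> Pow ({..<N} - X)" using assms P_def by auto
    then show "W \<in> (\<Union>Z\<in>P. (\<lambda>V. Z \<union> V) ` Pow ({..<N} - X))" by blast
  qed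
  then have "card J \<le> card (\<Union>Z\<in>P. (\<lambda>V. Z \<union> V) ` Pow ({..<N} - X))"
    using fP by (intro card_mono) auto
  also have "\<dots> \<le> (\<Sum>Z\<in>P. card ((\<lambda>V. Z \<union> V) ` Pow ({..<N} - X)))" using fP by (rule card_UN_le)
  also have "\<dots> \<le> (\<Sum>Z\<in>P. 2^(N - card X))"
  proof (rule sum_mono)
    fix Z assume "Z \<in> P"
    have "card ((\<lambda>V. Z \<union> V) ` Pow ({..<N} - X)) \<le> card (Pow ({..<N} - X))" by (rule card_image_le) simp
    also have "\<dots> = 2^(N - card X)" using assms(2) by (simp add: card_Pow card_Diff_subset finite_subset)
    finally show "card ((\<lambda>V. Z \<union> V) ` Pow ({..<N} - X)) \<le> 2^(N - card X)" .
  qed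
  also have "\<dots> = card P * 2^(N - card X)" by simp
  finally show ?thesis using P_def by simp
qed

lemma div_iff_range: "0 < (d::nat) \<Longrightarrow> r div d = l \<longleftrightarrow> l*d \<le> r \<and> r < (l+1)*d"
proof
  assume d: "0 < d" and l: "r div d = l"
  have "l*d \<le> r" using l div_times_less_eq_dividend by blast
  moreover have "r = l*d + r mod d" using l div_mult_mod_eq[of r d] by simp
  moreover have "r mod d < d" using d by simp
  ultimately show "l*d \<le> r \<and> r < (l+1)*d" by simp
next
  assume "0 < d" "l*d \<le> r \<and> r < (l+1)*d"
  then show "r div d = l" by (intro div_nat_eqI) (auto simp: mult.commute)
qed

definition chunk :: "nat \<Rightarrow> nat \<Rightarrow> (nat set \<Rightarrow> nat) \<Rightarrow> nat \<Rightarrow> nat set set" where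
  "chunk N e g l = {W. W \<subseteq> {..<N} \<and> g W div 2^(N-e) = l}"

lemma chunk_card:
  assumes "e \<le> N" "bij_betw g (Pow {..<N}) {..<2^N}" "l < 2^e"
  shows "card (chunk N e g l) = 2^(N-e)"
proof -
  define d :: nat where "d = 2^(N-e)"
  have d0: "d > 0" using d_def by simp
  have N: "(2::nat)^N = 2^e * d"
  proof -
    have "e + (N-e) = N" using assms(1) by simp
    then have "(2::nat)^N = 2^(e + (N-e))" by simp
    also have "\<dots> = 2^e * 2^(N-e)" by (rule power_add)
    finally show ?thesis using d_def by simp
  qed
  have sub: "chunk N e g l \<subseteq> Pow {..<N}" unfolding chunk_def by auto
  have inj: "inj_on g (chunk N e g l)" using bij_betw_imp_inj_on[OF assms(2)] sub by (rule inj_on_subset)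
  have img: "g ` Pow {..<N} = {..<2^N}" using assms(2) by (rule bij_betw_imp_surj_on)
  have "g ` chunk N e g l = {r. r < 2^N \<and> r div d = l}"
  proof
    show "g ` chunk N e g l \<subseteq> {r. r < 2^N \<and> r div d = l}"
    proof
      fix r assume "r \<in> g ` chunk N e g l"
      then obtain W where W: "W \<in> chunk N e g l" "r = g W" by blast
      then have "r \<in> g ` Pow {..<N}" using sub by blast
      then have "r < 2^N" using img by auto
      then show "r \<in> {r. r < 2^N \<and> r div d = l}" using W unfolding chunk_def d_def by auto
    qed
    show "{r. r < 2^N \<and> r div d = l} \<subseteq> g ` chunk N e g l"
    proof
      fix r assume r: "r \<in> {r. r < 2^N \<and> r div d = l}"
      then have "r \<in> g ` Pow {..<N}" using img by auto
      then obtain W where "W \<in> Pow {..<N}" "r = g W" by auto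
      then show "r \<in> g ` chunk N e g l" using r unfolding chunk_def d_def by auto
    qed
  qed
  also have "{r. r < 2^N \<and> r div d = l} = {l*d..<(l+1)*d}"
  proof -
    have "l+1 \<le> 2^e" using assms(3) by simp
    then have "(l+1)*d \<le> 2^e*d" by (rule mult_le_mono1)
    then have "(l+1)*d \<le> 2^N" using N by simp
    note bd = this
    have iff: "r div d = l \<longleftrightarrow> l*d \<le> r \<and> r < (l+1)*d" for r
      using d0 by (rule div_iff_range)
    show ?thesis
    proof (rule set_eqI)
      fix r
      have "r \<in> {r. r < 2^N \<and> r div d = l} \<longleftrightarrow> r < 2^N \<and> l*d \<le> r \<and> r < (l+1)*d"
        using iff[of r] by blast
      also have "\<dots> \<longleftrightarrow> l*d \<le> r \<and> r < (l+1)*d" using bd by (meson less_le_trans)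
      also have "\<dots> \<longleftrightarrow> r \<in> {l*d..<(l+1)*d}" by (rule atLeastLessThan_iff[symmetric])
      finally show "r \<in> {r. r < 2^N \<and> r div d = l} \<longleftrightarrow> r \<in> {l*d..<(l+1)*d}" .
    qed
  qed
  finally have "g ` chunk N e g l = {l*d..<(l+1)*d}" .
  then have "card (chunk N e g l) = card {l*d..<(l+1)*d}" using card_image[OF inj] by simp
  also have "\<dots> = d" by simp
  finally show ?thesis using d_def by simp
qed


lemma bij_count:
  assumes "bij_betw f A {..<n}" "h \<le> n"
  shows "card {x\<in>A. f x < h} = h" "card {x\<in>A. h \<le> f x} = n - h"
proof -
  have inj: "inj_on f A" and img: "f ` A = {..<n}" using assms(1) by (auto simp: bij_betw_def)
  have i1: "f ` {x\<in>A. f x < h} = {..<h}"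
  proof
    show "f ` {x\<in>A. f x < h} \<subseteq> {..<h}" by auto
    show "{..<h} \<subseteq> f ` {x\<in>A. f x < h}"
    proof
      fix r assume "r \<in> {..<h}"
      then have "r \<in> f ` A" using img assms(2) by auto
      then obtain x where "x \<in> A" "r = f x" by auto
      then show "r \<in> f ` {x\<in>A. f x < h}" using \<open>r \<in> {..<h}\<close> by auto
    qed
  qed
  have j1: "inj_on f {x\<in>A. f x < h}" using inj by (rule inj_on_subset) auto
  show "card {x\<in>A. f x < h} = h" using card_image[OF j1] i1 by simp
  have i2: "f ` {x\<in>A. h \<le> f x} = {h..<n}"
  proof
    show "f ` {x\<in>A. h \<le> f x} \<subseteq> {h..<n}" using img by auto
    show "{h..<n} \<subseteq> f ` {x\<in>A. h \<le> f x}"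
    proof
      fix r assume "r \<in> {h..<n}"
      then have "r \<in> f ` A" using img by auto
      then obtain x where "x \<in> A" "r = f x" by auto
      then show "r \<in> f ` {x\<in>A. h \<le> f x}" using \<open>r \<in> {h..<n}\<close> by auto
    qed
  qed
  have j2: "inj_on f {x\<in>A. h \<le> f x}" using inj by (rule inj_on_subset) auto
  show "card {x\<in>A. h \<le> f x} = n - h" using card_image[OF j2] i2 by simp
qed

lemma nat_rank:
  fixes X :: "nat set"
  assumes "finite X"
  shows "bij_betw (\<lambda>x. card {y\<in>X. y < x}) X {..<card X}"
    and "x \<in> X \<Longrightarrow> y \<in> X \<Longrightarrow> x < y \<longleftrightarrow> card {z\<in>X. z < x} < card {z\<in>X. z < y}"
proof -
  have a: "\<forall>x\<in>X. \<not> x < x" by simp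
  have b: "\<forall>x\<in>X. \<forall>y\<in>X. \<forall>z\<in>X. x < y \<longrightarrow> y < z \<longrightarrow> x < z" by simp
  have c: "\<forall>x\<in>X. \<forall>y\<in>X. x \<noteq> y \<longrightarrow> x < y \<or> y < x" by (simp add: nat_neq_iff)
  show "bij_betw (\<lambda>x. card {y\<in>X. y < x}) X {..<card X}" by (rule rank_lemma(1)[OF assms a b c])
  show "x \<in> X \<Longrightarrow> y \<in> X \<Longrightarrow> x < y \<longleftrightarrow> card {z\<in>X. z < x} < card {z\<in>X. z < y}"
    by (rule rank_lemma(2)[OF assms a b c])
qed

lemma split_first:
  fixes T :: "nat set"
  assumes "finite T" "a \<le> card T"
  shows "card {t\<in>T. card {u\<in>T. u < t} < a} = a"
        "card (T - {t\<in>T. card {u\<in>T. u < t} < a}) = card T - a"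
proof -
  show c: "card {t\<in>T. card {u\<in>T. u < t} < a} = a" using bij_count(1)[OF nat_rank(1)[OF assms(1)] assms(2)] .
  show "card (T - {t\<in>T. card {u\<in>T. u < t} < a}) = card T - a"
    using c assms(1) by (simp add: card_Diff_subset)
qed


lemma pow_ineq_aux:
  assumes "2^(2*h) \<le> cP * 2^e" "cP \<le> cB" "cB \<le> 2 * s * (h+1)^s * 2^h"
    "2^(e+1) * s * (h+1)^s < (2::nat)^h"
  shows False
proof -
  have "cP * 2^e \<le> 2 * s * (h+1)^s * 2^h * 2^e"
    using assms(2,3) by (intro mult_le_mono1) simp
  then have "(2::nat)^(2*h) \<le> 2 * s * (h+1)^s * 2^h * 2^e" using assms(1) by linarith
  also have "\<dots> = (2^(e+1) * s * (h+1)^s) * 2^h" by (simp add: algebra_simps power_add)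
  also have "\<dots> < 2^h * 2^h" using assms(4) by simp
  also have "\<dots> = 2^(2*h)" by (simp add: power_add[symmetric] mult_2)
  finally show False by simp
qed

lemma inner:
  fixes g :: "nat set \<Rightarrow> nat" and Low High :: "nat set"
  assumes eN: "e \<le> N" and hN: "2*h \<le> N"
    and g: "bij_betw g (Pow {..<N}) {..<2^N}"
    and ab: "a + b = s" "s \<le> h"
    and hpoly: "2^(e+1) * s * (h+1)^s < (2::nat)^h"
    and ram: "partn_lst {..<L} (replicate (2^(2^e)) (2*h)) s"
    and LH: "Low \<subseteq> {..<N}" "High \<subseteq> {..<N}" "Low \<inter> High = {}" "L \<le> card Low" "L \<le> card High"
  shows "\<exists>S \<subseteq> Low \<union> High. card (S \<inter> Low) = a \<and> card (S \<inter> High) = b \<and> (\<forall>l<2^e. shatters (chunk N e g l) S)"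
proof -
  have finL: "finite Low" "finite High" using LH(1,2) by (auto intro: finite_subset)
  obtain Low' where Low': "Low' \<subseteq> Low" "card Low' = L" "finite Low'" using LH(4) by (rule obtain_subset_with_card_n)
  obtain High' where High': "High' \<subseteq> High" "card High' = L" "finite High'" using LH(5) by (rule obtain_subset_with_card_n)
  obtain la where la: "bij_betw la {..<L} Low'" using finite_same_card_bij[of "{..<L}" Low'] Low' by auto
  obtain hi where hi: "bij_betw hi {..<L} High'" using finite_same_card_bij[of "{..<L}" High'] High' by auto
  have la_inj: "inj_on la {..<L}" and la_img: "la ` {..<L} = Low'" using la by (auto simp: bij_betw_def)
  have hi_inj: "inj_on hi {..<L}" and hi_img: "hi ` {..<L} = High'" using hi by (auto simp: bij_betw_def)
  define fst_of :: "nat set \<Rightarrow> nat set" where "fst_of T = {t\<in>T. card {u\<in>T. u < t} < a}" for T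
  define SS where "SS T = la ` fst_of T \<union> hi ` (T - fst_of T)" for T
  define Lam where "Lam T = {l. l < 2^e \<and> shatters (chunk N e g l) (SS T)}" for T
  obtain cod :: "nat set \<Rightarrow> nat" where cod: "bij_betw cod (Pow {..<2^e}) {..<2^(2^e)}"
    using finite_same_card_bij[of "Pow {..<(2::nat)^e}" "{..<(2::nat)^(2^e)}"] by (auto simp: card_Pow)
  define col where "col T = cod (Lam T)" for T
  have LamP: "Lam T \<in> Pow {..<2^e}" for T unfolding Lam_def by auto
  have colr: "col \<in> nsets {..<L} s \<rightarrow> {..<length (replicate (2^(2^e)) (2*h))}"
  proof
    fix T assume "T \<in> nsets {..<L} s"
    have "col T \<in> {..<2^(2^e)}" unfolding col_def using cod LamP[of T] by (auto simp: bij_betw_def)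
    then show "col T \<in> {..<length (replicate (2^(2^e)) (2*h))}" by simp
  qed
  obtain i where "i < length (replicate (2^(2^e)) (2*h))"
    "monochromatic {..<L} (replicate (2^(2^e)) (2*h) ! i) s col i"
    using ram colr unfolding partn_lst_def by blast
  then obtain H' where H': "H' \<in> nsets {..<L} (2*h)" "col ` nsets H' s \<subseteq> {i}"
    unfolding monochromatic_def by auto
  have H'L: "H' \<subseteq> {..<L}" and cH': "card H' = 2*h" and fH': "finite H'" using H'(1) by (auto simp: nsets_def)
  define rk where "rk t = card {u\<in>H'. u < t}" for t
  have rkb: "bij_betw rk H' {..<2*h}" unfolding rk_def using nat_rank(1)[OF fH'] cH' by simp
  have rko: "x < y \<longleftrightarrow> rk x < rk y" if "x \<in> H'" "y \<in> H'" for x y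
    unfolding rk_def using nat_rank(2)[OF fH' that] .
  define H1 where "H1 = {t\<in>H'. rk t < h}"
  define H2 where "H2 = {t\<in>H'. h \<le> rk t}"
  have cH1: "card H1 = h" unfolding H1_def using bij_count(1)[OF rkb] by simp
  have cH2: "card H2 = h" unfolding H2_def using bij_count(2)[OF rkb] by simp
  have H12: "H1 \<subseteq> H'" "H2 \<subseteq> H'" "H1 \<inter> H2 = {}" unfolding H1_def H2_def by auto
  have H12o: "x < y" if "x \<in> H1" "y \<in> H2" for x y
    using that rko[of x y] unfolding H1_def H2_def by auto
  obtain T0 where T0: "T0 \<subseteq> H'" "card T0 = s" "finite T0"
    using obtain_subset_with_card_n[of s H'] cH' ab by auto
  have T0n: "T0 \<in> nsets H' s" using T0 by (simp add: nsets_def)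
  have colT0: "col T0 = i" using H'(2) T0n by blast
  have codinj: "inj_on cod (Pow {..<2^e})" using cod by (simp add: bij_betw_def)
  have allLam: "l \<in> Lam T0" if l: "l < 2^e" for l
  proof -
    define X1 where "X1 = la ` H1"
    define X2 where "X2 = hi ` H2"
    define X where "X = X1 \<union> X2"
    have la1: "inj_on la H1" using la_inj H12 H'L by (meson inj_on_subset order_trans)
    have hi2: "inj_on hi H2" using hi_inj H12 H'L by (meson inj_on_subset order_trans)
    have cX1: "card X1 = h" unfolding X1_def using card_image[OF la1] cH1 by simp
    have cX2: "card X2 = h" unfolding X2_def using card_image[OF hi2] cH2 by simp
    have X1L: "X1 \<subseteq> Low" unfolding X1_def using la_img Low'(1) H12 H'L by blast
    have X2H: "X2 \<subseteq> High" unfolding X2_def using hi_img High'(1) H12 H'L by blast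
    have fX: "finite X1" "finite X2" using X1_def X2_def H12 fH' by (auto intro: finite_subset)
    have dX: "X1 \<inter> X2 = {}" using X1L X2H LH(3) by blast
    have XN: "X \<subseteq> {..<N}" unfolding X_def using X1L X2H LH(1,2) by blast
    have cX: "card X = 2*h" unfolding X_def using card_Un_disjoint[OF fX dX] cX1 cX2 by simp
    define J where "J = chunk N e g l"
    have cJ: "card J = 2^(N-e)" unfolding J_def by (rule chunk_card[OF eN g l])
    have JP: "J \<subseteq> Pow {..<N}" unfolding J_def chunk_def by auto
    define P where "P = (\<lambda>W. W \<inter> X) ` J"
    have fib: "card J \<le> card P * 2^(N - 2*h)" using fiber_card[OF JP XN] cX P_def by simp
    have big: "2^(2*h) \<le> card P * 2^e"
    proof -
      have "(2::nat)^(2*h) * 2^(N - 2*h) = 2^N" using hN by (simp add: power_add[symmetric])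
      also have "(2::nat)^N = 2^(N-e) * 2^e" using eN by (simp add: power_add[symmetric])
      also have "\<dots> \<le> card P * 2^(N - 2*h) * 2^e" using fib cJ by (intro mult_le_mono1) simp
      also have "\<dots> = (card P * 2^e) * 2^(N - 2*h)" by (simp add: algebra_simps)
      finally show ?thesis by simp
    qed
    have PX: "P \<subseteq> Pow X" unfolding P_def by auto
    have fXX: "finite X" using fX X_def by simp
    define G where "G = {Y. Y \<subseteq> X \<and> shatters P Y}"
    have pj: "card P \<le> card G" unfolding G_def by (rule pajor[OF fXX PX])
    define Bad where "Bad = {Y. Y \<subseteq> X1 \<union> X2 \<and> (card (Y \<inter> X1) < a \<or> card (Y \<inter> X2) < b)}"
    have cBad: "card Bad \<le> 2 * s * (h+1)^s * 2^h" unfolding Bad_def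
      by (rule bad_card[OF fX cX1 cX2]) (use ab in auto)
    have "\<exists>Y\<in>G. a \<le> card (Y \<inter> X1) \<and> b \<le> card (Y \<inter> X2)"
    proof (rule ccontr)
      assume nn: "\<not> ?thesis"
      have "G \<subseteq> Bad"
      proof
        fix Y assume "Y \<in> G"
        then have "\<not> (a \<le> card (Y \<inter> X1) \<and> b \<le> card (Y \<inter> X2))" "Y \<subseteq> X1 \<union> X2"
          using nn unfolding G_def X_def by auto
        then show "Y \<in> Bad" unfolding Bad_def by auto
      qed
      moreover have "finite Bad" unfolding Bad_def using fX by (auto intro: finite_subset[of _ "Pow (X1 \<union> X2)"])
      ultimately have "card G \<le> card Bad" by (rule card_mono[rotated])
      then show False using pow_ineq_aux[OF big _ cBad hpoly] pj by linarith
    qed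
    then obtain Y where Y: "Y \<in> G" "a \<le> card (Y \<inter> X1)" "b \<le> card (Y \<inter> X2)" by blast
    obtain Z1 where Z1: "Z1 \<subseteq> Y \<inter> X1" "card Z1 = a" "finite Z1" using Y(2) by (rule obtain_subset_with_card_n)
    obtain Z2 where Z2: "Z2 \<subseteq> Y \<inter> X2" "card Z2 = b" "finite Z2" using Y(3) by (rule obtain_subset_with_card_n)
    define T1 where "T1 = {t\<in>H1. la t \<in> Z1}"
    define T2 where "T2 = {t\<in>H2. hi t \<in> Z2}"
    have imT1: "la ` T1 = Z1" using Z1(1) unfolding T1_def X1_def by auto
    have imT2: "hi ` T2 = Z2" using Z2(1) unfolding T2_def X2_def by auto
    have cT1: "card T1 = a" using Z1(2) imT1 card_image[OF inj_on_subset[OF la1, of T1]] T1_def by auto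
    have cT2: "card T2 = b" using Z2(2) imT2 card_image[OF inj_on_subset[OF hi2, of T2]] T2_def by auto
    define T where "T = T1 \<union> T2"
    have T12: "T1 \<subseteq> H1" "T2 \<subseteq> H2" unfolding T1_def T2_def by auto
    have fT: "finite T1" "finite T2" using T12 H12 fH' by (meson finite_subset order_trans)+
    have dT: "T1 \<inter> T2 = {}" using T12 H12(3) by blast
    have cT: "card T = s" unfolding T_def using card_Un_disjoint[OF fT dT] cT1 cT2 ab by simp
    have TH: "T \<subseteq> H'" unfolding T_def using T12 H12 by blast
    have Tn: "T \<in> nsets H' s" using TH cT fT T_def by (simp add: nsets_def)
    have fstT: "fst_of T = T1"
    proof
      show "fst_of T \<subseteq> T1"
      proof
        fix t assume t: "t \<in> fst_of T"
        then have tT: "t \<in> T" and lt: "card {u\<in>T. u < t} < a" unfolding fst_of_def by auto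
        show "t \<in> T1"
        proof (rule ccontr)
          assume "t \<notin> T1"
          then have "t \<in> T2" using tT T_def by auto
          then have "T1 \<subseteq> {u\<in>T. u < t}" using H12o T12 T_def by auto
          then have "card T1 \<le> card {u\<in>T. u < t}" using fT T_def by (intro card_mono) auto
          then show False using lt cT1 by simp
        qed
      qed
      show "T1 \<subseteq> fst_of T"
      proof
        fix t assume t: "t \<in> T1"
        have "{u\<in>T. u < t} \<subseteq> T1 - {t}"
        proof
          fix u assume u: "u \<in> {u\<in>T. u < t}"
          have "u \<notin> T2"
          proof
            assume "u \<in> T2"
            then have "t < u" using H12o T12 t by blast
            then show False using u by simp
          qed
          then show "u \<in> T1 - {t}" using u T_def by auto
        qed
        then have "card {u\<in>T. u < t} \<le> card (T1 - {t})" using fT by (intro card_mono) auto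
        also have "\<dots> < card T1" using card_Diff1_less[OF fT(1) t] .
        finally show "t \<in> fst_of T" unfolding fst_of_def using t T_def cT1 by auto
      qed
    qed
    have "T - T1 = T2" using dT T_def by blast
    then have SST: "SS T = Z1 \<union> Z2" unfolding SS_def fstT using imT1 imT2 by simp
    have "shatters J Y" using Y(1) unfolding G_def P_def by (auto intro: shatters_proj)
    then have "shatters J (SS T)" unfolding SST using Z1 Z2 by (auto intro: shatters_mono)
    then have "l \<in> Lam T" unfolding Lam_def J_def using l by auto
    moreover have "col T = i" using H'(2) Tn by blast
    then have "Lam T = Lam T0" using colT0 codinj LamP unfolding col_def inj_on_def by auto
    ultimately show "l \<in> Lam T0" by simp
  qed
  define S where "S = SS T0"
  have T0L: "T0 \<subseteq> {..<L}" using T0 H'L by auto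
  have fsub: "fst_of T0 \<subseteq> T0" unfolding fst_of_def by auto
  have laL: "la ` fst_of T0 \<subseteq> Low" using la_img Low'(1) fsub T0L by blast
  have hiH: "hi ` (T0 - fst_of T0) \<subseteq> High" using hi_img High'(1) T0L by blast
  have SL: "S \<inter> Low = la ` fst_of T0" unfolding S_def SS_def using laL hiH LH(3) by blast
  have SH: "S \<inter> High = hi ` (T0 - fst_of T0)" unfolding S_def SS_def using laL hiH LH(3) by blast
  have cf: "card (fst_of T0) = a" unfolding fst_of_def using split_first(1)[OF T0(3)] T0(2) ab by simp
  have cf2: "card (T0 - fst_of T0) = b" unfolding fst_of_def using split_first(2)[OF T0(3)] T0(2) ab by simp
  have "card (S \<inter> Low) = a" unfolding SL using card_image[OF inj_on_subset[OF la_inj]] fsub T0L cf by (metis order_trans)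
  moreover have "card (S \<inter> High) = b" unfolding SH using card_image[OF inj_on_subset[OF hi_inj]] T0L cf2 by (metis Diff_subset order_trans)
  moreover have "S \<subseteq> Low \<union> High" unfolding S_def SS_def using laL hiH by blast
  moreover have "\<forall>l<2^e. shatters (chunk N e g l) S" using allLam unfolding Lam_def S_def by blast
  ultimately show ?thesis by blast
qed


lemma rank_lt_card:
  fixes C :: "nat set"
  assumes "finite C" "q \<in> C"
  shows "card {c\<in>C. c < q} < card C"
  using bij_betw_imp_surj_on[OF nat_rank(1)[OF assms(1)]] assms(2) by blast

lemma rank_inj:
  fixes C :: "nat set"
  assumes "finite C" "q \<in> C" "q' \<in> C" "card {c\<in>C. c < q} = card {c\<in>C. c < q'}"
  shows "q = q'"
  using bij_betw_imp_inj_on[OF nat_rank(1)[OF assms(1)]] assms(2,3,4) unfolding inj_on_def by blast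

lemma core:
  "\<exists>N. e \<le> N \<and> (\<forall>rk. (\<forall>q<N. bij_betw (rk q) (Pow {..<N}) {..<2^N}) \<longrightarrow>
     (\<exists>C. C \<subseteq> {..<N} \<and> card C = k \<and> (\<forall>q\<in>C. \<forall>l<2^e. shatters (chunk N e (rk q) l) (C - {q}))))"
proof (cases "k = 0")
  case True
  then show ?thesis by (intro exI[of _ e]) auto
next
  case False
  define s where "s = k - 1"
  obtain h where h: "h \<ge> k" "(2^(e+1) * s) * (h+1)^s < (2::nat)^h" using poly_exp by blast
  have hs: "s \<le> h" using h(1) s_def by simp
  obtain L0 :: nat where L0: "partn_lst {..<L0} (replicate (2^(2^e)) (2*h)) s" using ramsey_full[of "replicate (2^(2^e)) (2*h)" s] by blast
  define L where "L = max L0 k"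
  have ramL: "partn_lst {..<L} (replicate (2^(2^e)) (2*h)) s"
    using partn_lst_greater_resource[OF L0] L_def by simp
  obtain N0 :: nat where N0: "partn_lst {..<N0} (replicate (2^k) (2*L+1)) k" using ramsey_full[of "replicate (2^k) (2*L+1)" k] by blast
  define N where "N = max N0 (2*h + e)"
  have ramN: "partn_lst {..<N} (replicate (2^k) (2*L+1)) k"
    using partn_lst_greater_resource[OF N0] N_def by simp
  have eN: "e \<le> N" and hN: "2*h \<le> N" using N_def by auto
  show ?thesis
  proof (intro exI[of _ N] conjI allI impI)
    show "e \<le> N" by (rule eN)
    fix rk :: "nat \<Rightarrow> nat set \<Rightarrow> nat"
    assume rkb: "\<forall>q<N. bij_betw (rk q) (Pow {..<N}) {..<2^N}"
    define good where "good q S \<longleftrightarrow> (\<forall>l<2^e. shatters (chunk N e (rk q) l) S)" for q S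
    define Gam where "Gam C = {card {c\<in>C. c < q} | q. q \<in> C \<and> good q (C - {q})}" for C
    have GamP: "Gam C \<in> Pow {..<k}" if "C \<in> nsets {..<N} k" for C
    proof -
      have fC: "finite C" "card C = k" using that by (auto simp: nsets_def)
      show ?thesis unfolding Gam_def using rank_lt_card[OF fC(1)] fC(2) by auto
    qed
    obtain cod :: "nat set \<Rightarrow> nat" where cod: "bij_betw cod (Pow {..<k}) {..<(2::nat)^k}"
      using finite_same_card_bij[of "Pow {..<k}" "{..<(2::nat)^k}"] by (auto simp: card_Pow)
    have codinj: "inj_on cod (Pow {..<k})" using cod by (simp add: bij_betw_def)
    define col where "col C = cod (Gam C)" for C
    have colr: "col \<in> nsets {..<N} k \<rightarrow> {..<length (replicate (2^k) (2*L+1))}"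
    proof
      fix C assume "C \<in> nsets {..<N} k"
      then have "col C \<in> {..<2^k}" unfolding col_def using cod GamP by (auto simp: bij_betw_def)
      then show "col C \<in> {..<length (replicate (2^k) (2*L+1))}" by simp
    qed
    obtain j0 where "j0 < length (replicate (2^k) (2*L+1))"
      "monochromatic {..<N} (replicate (2^k) (2*L+1) ! j0) k col j0"
      using ramN colr unfolding partn_lst_def by blast
    then obtain H where H: "H \<in> nsets {..<N} (2*L+1)" "col ` nsets H k \<subseteq> {j0}"
      unfolding monochromatic_def by auto
    have HN: "H \<subseteq> {..<N}" and cH: "card H = 2*L+1" and fH: "finite H" using H(1) by (auto simp: nsets_def)
    have kH: "k \<le> card H" using cH L_def by simp
    obtain C0 where C0: "C0 \<subseteq> H" "card C0 = k" "finite C0"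
      using kH by (rule obtain_subset_with_card_n)
    have C0n: "C0 \<in> nsets H k" using C0 by (simp add: nsets_def)
    have C0N: "C0 \<in> nsets {..<N} k" using C0 HN by (auto simp: nsets_def)
    have homog: "Gam C = Gam C0" if "C \<subseteq> H" "card C = k" for C
    proof -
      have fC: "finite C" using that fH by (auto intro: finite_subset)
      have "C \<in> nsets H k" using that fC by (simp add: nsets_def)
      then have "col C = col C0" using H(2) C0n by blast
      moreover have "C \<in> nsets {..<N} k" using that fC HN by (auto simp: nsets_def)
      ultimately show ?thesis using codinj GamP C0N unfolding col_def inj_on_def by blast
    qed
    define rkH where "rkH t = card {u\<in>H. u < t}" for t
    have rkHb: "bij_betw rkH H {..<2*L+1}" unfolding rkH_def using nat_rank(1)[OF fH] cH by simp
    have rkHo: "x < y \<longleftrightarrow> rkH x < rkH y" if "x \<in> H" "y \<in> H" for x y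
      unfolding rkH_def using nat_rank(2)[OF fH that] .
    obtain p where p: "p \<in> H" "rkH p = L"
      using bij_betw_imp_surj_on[OF rkHb] by (metis imageE lessThan_iff less_add_one mult_2 trans_less_add1 add_lessD1 less_add_same_cancel1 less_irrefl_nat not_add_less1 nat_less_le zero_less_one)
    define Low where "Low = {x\<in>H. x < p}"
    define High where "High = {x\<in>H. p < x}"
    have LowE: "Low = {x\<in>H. rkH x < L}" unfolding Low_def using rkHo p by auto
    have HighE: "High = {x\<in>H. L+1 \<le> rkH x}" unfolding High_def using rkHo p by auto
    have cLow: "card Low = L" unfolding LowE using bij_count(1)[OF rkHb, of L] by simp
    have cHigh: "card High = L" unfolding HighE using bij_count(2)[OF rkHb, of "L+1"] by simp
    have LH: "Low \<subseteq> {..<N}" "High \<subseteq> {..<N}" "Low \<inter> High = {}" using HN Low_def High_def by auto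
    have pLH: "p \<notin> Low \<union> High" using Low_def High_def by auto
    have allpos: "i \<in> Gam C0" if i: "i < k" for i
    proof -
      have ab: "i + (k - 1 - i) = s" using i s_def by simp
      have pN: "p < N" using p HN by auto
      obtain S where S: "S \<subseteq> Low \<union> High" "card (S \<inter> Low) = i" "card (S \<inter> High) = k - 1 - i"
          "\<forall>l<2^e. shatters (chunk N e (rk p) l) S"
        using inner[OF eN hN rkb[rule_format, OF pN] ab hs _ ramL LH] h(2) cLow cHigh by auto
      have fS: "finite S" using S(1) fH Low_def High_def by (auto intro: finite_subset)
      have "S = (S \<inter> Low) \<union> (S \<inter> High)" using S(1) by auto
      moreover have "(S \<inter> Low) \<inter> (S \<inter> High) = {}" using LH(3) by blast
      moreover have "finite (S \<inter> Low)" "finite (S \<inter> High)" using fS by auto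
      ultimately have "card S = card (S \<inter> Low) + card (S \<inter> High)" by (metis card_Un_disjoint)
      then have cS: "card S = k - 1" using S(2,3) i by simp
      define C where "C = insert p S"
      have pS: "p \<notin> S" using pLH S(1) by auto
      have cC: "card C = k" unfolding C_def using cS pS fS False by simp
      have CH: "C \<subseteq> H" unfolding C_def using p S(1) Low_def High_def by auto
      have "{c\<in>C. c < p} = S \<inter> Low" unfolding C_def Low_def using S(1) Low_def High_def by auto
      then have rp: "card {c\<in>C. c < p} = i" using S(2) by simp
      have "C - {p} = S" unfolding C_def using pS by auto
      then have "good p (C - {p})" unfolding good_def using S(4) by simp
      then have "i \<in> Gam C" unfolding Gam_def using rp C_def by auto
      then show ?thesis using homog[OF CH cC] by simp
    qed
    show "\<exists>C\<subseteq>{..<N}. card C = k \<and> (\<forall>q\<in>C. \<forall>l<2^e. shatters (chunk N e (rk q) l) (C - {q}))"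
    proof (intro exI[of _ C0] conjI ballI allI impI)
      show "C0 \<subseteq> {..<N}" using C0 HN by auto
      show "card C0 = k" by (rule C0(2))
      fix q and l :: nat assume q: "q \<in> C0" and l: "l < 2^e"
      have "card {c\<in>C0. c < q} < k" using rank_lt_card[OF C0(3) q] C0(2) by simp
      then have "card {c\<in>C0. c < q} \<in> Gam C0" by (rule allpos)
      then obtain q' where q': "q' \<in> C0" "good q' (C0 - {q'})" "card {c\<in>C0. c < q} = card {c\<in>C0. c < q'}"
        unfolding Gam_def by auto
      have "q = q'" by (rule rank_inj[OF C0(3) q q'(1) q'(3)])
      then show "shatters (chunk N e (rk q) l) (C0 - {q})" using q'(2) l unfolding good_def by simp
    qed
  qed
qed


lemma card4:
  assumes "u \<noteq> v" "x \<noteq> y"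
  shows "card {(a, b). a \<in> {u, v} \<and> b \<in> {x, y} \<and> (a, b) \<in> E} =
    of_bool ((u,x)\<in>E) + of_bool ((u,y)\<in>E) + of_bool ((v,x)\<in>E) + of_bool ((v,y)\<in>E)"
proof -
  have eq: "{(a, b). a \<in> {u, v} \<and> b \<in> {x, y} \<and> (a, b) \<in> E} = {z \<in> {(u,x),(u,y),(v,x),(v,y)}. z \<in> E}"
    by auto
  have "card {z \<in> {(u,x),(u,y),(v,x),(v,y)}. z \<in> E} = (\<Sum>z\<in>{z \<in> {(u,x),(u,y),(v,x),(v,y)}. z \<in> E}. 1)"
    by (rule card_eq_sum)
  also have "\<dots> = (\<Sum>z\<in>{(u,x),(u,y),(v,x),(v,y)}. if z \<in> E then 1 else 0)"
    by (rule sum.inter_filter) simp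
  also have "\<dots> = of_bool ((u,x)\<in>E) + of_bool ((u,y)\<in>E) + of_bool ((v,x)\<in>E) + of_bool ((v,y)\<in>E)"
    using assms by simp
  finally show ?thesis using eq by simp
qed

lemma even4_xor:
  "even (of_bool a + of_bool b + of_bool c + of_bool (d::bool) :: nat) \<Longrightarrow> (a \<noteq> b) = (c \<noteq> d)"
  by (cases a; cases b; cases c; cases d) auto

locale sstar =
  fixes A :: "nat set" and E R Lt :: "(nat \<times> nat) set"
    and Ab :: "nat set" and Eb :: "(nat \<times> nat) set" and t :: "nat \<Rightarrow> nat" and Ob :: "(nat \<times> nat) set" and k :: nat
  assumes SA: "in_S A E" and SAb: "in_S Ab Eb" and sub: "A \<subseteq> Ab" and Eeq: "E = Eb \<inter> (A \<times> A)"
    and kb: "card (parts Ab Eb) = k"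
    and tin: "\<forall>i<k. t i \<in> Ab - A"
    and tuniq: "\<forall>P\<in>parts Ab Eb. \<exists>!i. i < k \<and> t i \<in> P"
    and tE: "\<forall>i j. i < j \<and> j < k \<longrightarrow> (t i, t j) \<in> Eb"
    and Rdef: "R = {(x, u). x \<in> A \<and> u \<in> A \<and> \<not> same_part Eb x u \<and>
                    (\<exists>i < k. same_part Eb (t i) x \<and> (t i, u) \<in> Eb)}"
    and lin: "strict_linorder_on Ab Ob"
    and conv: "\<forall>P \<in> parts Ab Eb. \<forall>a \<in> P. \<forall>c \<in> P. \<forall>b \<in> Ab. (a, b) \<in> Ob \<and> (b, c) \<in> Ob \<longrightarrow> b \<in> P"
    and tO: "\<forall>i j. i < j \<and> j < k \<longrightarrow> (t i, t j) \<in> Ob"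
    and Lteq: "Lt = Ob \<inter> (A \<times> A)"

lemma in_Sstar_sstar:
  assumes "in_Sstar A E R Lt"
  shows "\<exists>Ab Eb t Ob. sstar A E R Lt Ab Eb t Ob (card (parts A E))"
  using assms unfolding in_Sstar_def Let_def sstar_def
  by (elim conjE exE) (intro exI conjI; assumption)

context sstar
begin

abbreviation sp where "sp \<equiv> same_part Eb"

lemma dig: "Eb \<subseteq> Ab \<times> Ab" "(x, x) \<notin> Eb" "(x, y) \<in> Eb \<Longrightarrow> (y, x) \<notin> Eb"
  using SAb unfolding in_S_def complete_multipartite_def digraph_def by auto

lemma eqv: "equiv Ab (part_rel Ab Eb)"
  using SAb unfolding in_S_def complete_multipartite_def by auto

lemma sp_sym: "sp x y \<Longrightarrow> sp y x" unfolding same_part_def by auto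

lemma sp_refl: "sp x x" unfolding same_part_def by auto

lemma sp_trans: "x \<in> Ab \<Longrightarrow> y \<in> Ab \<Longrightarrow> z \<in> Ab \<Longrightarrow> sp x y \<Longrightarrow> sp y z \<Longrightarrow> sp x z"
proof -
  assume a: "x \<in> Ab" "y \<in> Ab" "z \<in> Ab" "sp x y" "sp y z"
  have "trans (part_rel Ab Eb)" using eqv by (simp add: equiv_def)
  moreover have "(x, y) \<in> part_rel Ab Eb" "(y, z) \<in> part_rel Ab Eb" using a by (auto simp: part_rel_def)
  ultimately have "(x, z) \<in> part_rel Ab Eb" by (meson transD)
  then show "sp x z" by (simp add: part_rel_def)
qed

definition partb where "partb x = part_rel Ab Eb `` {x}"

lemma partb_in: "x \<in> Ab \<Longrightarrow> partb x \<in> parts Ab Eb"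
  unfolding partb_def parts_def by (rule quotientI)

lemma mem_partb: "x \<in> Ab \<Longrightarrow> y \<in> partb x \<longleftrightarrow> y \<in> Ab \<and> sp x y"
  unfolding partb_def part_rel_def by auto

lemma t_in: "i < k \<Longrightarrow> t i \<in> Ab" "i < k \<Longrightarrow> t i \<notin> A" using tin by auto

lemma t_ex: "x \<in> Ab \<Longrightarrow> \<exists>i<k. sp (t i) x"
proof -
  assume x: "x \<in> Ab"
  have "\<exists>!i. i < k \<and> t i \<in> partb x" using tuniq partb_in[OF x] by blast
  then obtain i where "i < k" "t i \<in> partb x" by (meson ex1E)
  then show ?thesis using mem_partb[OF x] sp_sym by blast
qed

lemma t_uniq: "x \<in> Ab \<Longrightarrow> i < k \<Longrightarrow> j < k \<Longrightarrow> sp (t i) x \<Longrightarrow> sp (t j) x \<Longrightarrow> i = j"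
proof -
  assume a: "x \<in> Ab" "i < k" "j < k" "sp (t i) x" "sp (t j) x"
  have "t i \<in> partb x" "t j \<in> partb x" using a mem_partb[OF a(1)] t_in sp_sym by auto
  moreover have "\<exists>!i. i < k \<and> t i \<in> partb x" using tuniq partb_in[OF a(1)] by blast
  then obtain i0 where u: "\<And>y. y < k \<and> t y \<in> partb x \<Longrightarrow> y = i0" by (rule ex1E) blast
  ultimately show "i = j" using a(2,3) u by metis
qed

lemma one_dir: "a \<in> Ab \<Longrightarrow> b \<in> Ab \<Longrightarrow> \<not> sp a b \<Longrightarrow> (a, b) \<in> Eb \<longleftrightarrow> (b, a) \<notin> Eb"
  using dig(3) unfolding same_part_def by auto

lemma Rchar: "x \<in> A \<Longrightarrow> u \<in> A \<Longrightarrow> \<not> sp x u \<Longrightarrow> i < k \<Longrightarrow> sp (t i) x \<Longrightarrow> (x, u) \<in> R \<longleftrightarrow> (t i, u) \<in> Eb"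
proof -
  assume a: "x \<in> A" "u \<in> A" "\<not> sp x u" "i < k" "sp (t i) x"
  show "(x, u) \<in> R \<longleftrightarrow> (t i, u) \<in> Eb"
  proof
    assume "(x, u) \<in> R"
    then obtain j where j: "j < k" "sp (t j) x" "(t j, u) \<in> Eb" using Rdef by auto
    have "j = i" using t_uniq[of x j i] j a sub by auto
    then show "(t i, u) \<in> Eb" using j by simp
  next
    assume "(t i, u) \<in> Eb"
    then show "(x, u) \<in> R" using Rdef a by auto
  qed
qed

lemma Rsp: "(x, u) \<in> R \<Longrightarrow> x \<in> A \<and> u \<in> A \<and> \<not> sp x u" using Rdef by auto

lemma R_part: "x \<in> A \<Longrightarrow> x' \<in> A \<Longrightarrow> sp x x' \<Longrightarrow> (x, u) \<in> R \<longleftrightarrow> (x', u) \<in> R"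
proof -
  assume a: "x \<in> A" "x' \<in> A" "sp x x'"
  have Ab: "x \<in> Ab" "x' \<in> Ab" using a sub by auto
  have e1: "sp x u \<longleftrightarrow> sp x' u" if "u \<in> A" for u
  proof -
    have uA: "u \<in> Ab" using that sub by auto
    show ?thesis using sp_trans[OF Ab(2) Ab(1) uA] sp_trans[OF Ab(1) Ab(2) uA] sp_sym[OF a(3)] a(3) by blast
  qed
  have e2: "sp (t i) x \<longleftrightarrow> sp (t i) x'" if "i < k" for i
  proof -
    have tA: "t i \<in> Ab" using that t_in by auto
    show ?thesis using sp_trans[OF tA Ab(1) Ab(2)] sp_trans[OF tA Ab(2) Ab(1)] sp_sym[OF a(3)] a(3) by blast
  qed
  show ?thesis unfolding Rdef using e1 e2 a by auto
qed

lemma parity4: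
  assumes "a \<in> Ab" "b \<in> Ab" "c \<in> Ab" "d \<in> Ab" "a \<noteq> b" "c \<noteq> d" "sp a b" "sp c d" "\<not> sp a c"
  shows "even (of_bool ((a,c)\<in>Eb) + of_bool ((a,d)\<in>Eb) + of_bool ((b,c)\<in>Eb) + of_bool ((b,d)\<in>Eb) :: nat)"
proof -
  have par: "parity_ok Ab Eb" using SAb by (simp add: in_S_def)
  have P: "partb a \<in> parts Ab Eb" "partb c \<in> parts Ab Eb" using assms partb_in by auto
  have ne: "partb a \<noteq> partb c" using mem_partb assms sp_refl by blast
  have mem: "a \<in> partb a" "b \<in> partb a" "c \<in> partb c" "d \<in> partb c"
    using mem_partb assms sp_refl by auto
  have "even (card {(x, y). x \<in> {a, b} \<and> y \<in> {c, d} \<and> (x, y) \<in> Eb})"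
    using par[unfolded parity_ok_def, rule_format, OF P(1) P(2) ne mem(1) mem(2) mem(3) mem(4) assms(5) assms(6)] .
  then show ?thesis using card4[OF assms(5,6), of Eb] by simp
qed

lemma R_par:
  assumes "x \<in> A" "u \<in> A" "u' \<in> A" "sp u u'" "\<not> sp x u"
  shows "(((x, u) \<in> R) \<noteq> ((x, u') \<in> R)) = (((x, u) \<in> Eb) \<noteq> ((x, u') \<in> Eb))"
proof (cases "u = u'")
  case True then show ?thesis by simp
next
  case False
  have xA: "x \<in> Ab" "u \<in> Ab" "u' \<in> Ab" using assms sub by auto
  obtain i where i: "i < k" "sp (t i) x" using t_ex[OF xA(1)] by blast
  have tx: "t i \<noteq> x" using t_in[OF i(1)] assms(1) by auto
  have tA: "t i \<in> Ab" using t_in(1)[OF i(1)] .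
  have nsp: "\<not> sp (t i) u"
  proof
    assume "sp (t i) u"
    then have "sp x u" using sp_trans[OF xA(1) tA xA(2)] sp_sym[OF i(2)] by blast
    then show False using assms(5) by simp
  qed
  have nsp': "\<not> sp x u'"
  proof
    assume "sp x u'"
    then have "sp x u" using sp_trans[OF xA(1) xA(3) xA(2)] sp_sym[OF assms(4)] by blast
    then show False using assms(5) by simp
  qed
  have "even (of_bool ((t i,u)\<in>Eb) + of_bool ((t i,u')\<in>Eb) + of_bool ((x,u)\<in>Eb) + of_bool ((x,u')\<in>Eb) :: nat)"
    by (rule parity4[OF tA xA(1) xA(2) xA(3) tx False i(2) assms(4) nsp])
  moreover have "(x, u) \<in> R \<longleftrightarrow> (t i, u) \<in> Eb" by (rule Rchar[OF assms(1) assms(2) assms(5) i(1) i(2)])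
  moreover have "(x, u') \<in> R \<longleftrightarrow> (t i, u') \<in> Eb" by (rule Rchar[OF assms(1) assms(3) nsp' i(1) i(2)])
  ultimately show ?thesis using even4_xor by simp
qed

lemma lin_facts: "(x, x) \<notin> Ob" "(x, y) \<in> Ob \<Longrightarrow> (y, z) \<in> Ob \<Longrightarrow> (x, z) \<in> Ob"
  "x \<in> Ab \<Longrightarrow> y \<in> Ab \<Longrightarrow> x \<noteq> y \<Longrightarrow> (x, y) \<in> Ob \<or> (y, x) \<in> Ob" "Ob \<subseteq> Ab \<times> Ab"
  using lin unfolding strict_linorder_on_def by blast+

lemma ord_parts:
  assumes "a \<in> Ab" "a' \<in> Ab" "b \<in> Ab" "b' \<in> Ab" "sp a a'" "sp b b'" "\<not> sp a b" "(a, b) \<in> Ob"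
  shows "(a', b') \<in> Ob"
proof -
  have n1: "\<not> sp a' b"
  proof
    assume "sp a' b"
    then have "sp a b" using sp_trans[OF assms(1) assms(2) assms(3)] assms(5) by blast
    then show False using assms(7) by simp
  qed
  have n2: "\<not> sp a' b'"
  proof
    assume "sp a' b'"
    then have "sp a' b" using sp_trans[OF assms(2) assms(4) assms(3)] sp_sym[OF assms(6)] by blast
    then show False using n1 by simp
  qed
  have ab1: "a' \<noteq> b" using n1 sp_refl by auto
  have ab2: "a' \<noteq> b'" using n2 sp_refl by auto
  have s1: "(a', b) \<in> Ob"
  proof (rule ccontr)
    assume "(a', b) \<notin> Ob"
    then have "(b, a') \<in> Ob" using lin_facts(3)[of a' b] assms ab1 by auto
    have m: "a \<in> partb a" "a' \<in> partb a" using mem_partb[OF assms(1)] assms sp_refl by auto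
    have "b \<in> partb a" using conv[rule_format, OF partb_in[OF assms(1)] m(1) m(2) assms(3)] assms(8) \<open>(b, a') \<in> Ob\<close> by blast
    then show False using mem_partb[OF assms(1)] assms(7) by blast
  qed
  show ?thesis
  proof (rule ccontr)
    assume "(a', b') \<notin> Ob"
    then have "(b', a') \<in> Ob" using lin_facts(3)[of a' b'] assms ab2 by auto
    have m: "b' \<in> partb b" "b \<in> partb b" using mem_partb[OF assms(3)] assms sp_refl by auto
    have "a' \<in> partb b" using conv[rule_format, OF partb_in[OF assms(3)] m(1) m(2) assms(2)] s1 \<open>(b', a') \<in> Ob\<close> by blast
    then show False using mem_partb[OF assms(3)] n1 sp_sym by blast
  qed
qed

lemma E_R_ord:
  assumes "x \<in> A" "u \<in> A" "\<not> sp x u" "(x, u) \<in> Ob"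
  shows "(x, u) \<in> Eb \<longleftrightarrow> (((x, u) \<in> R) \<noteq> ((u, x) \<in> R))"
proof -
  have xA: "x \<in> Ab" "u \<in> Ab" using assms sub by auto
  obtain i where i: "i < k" "sp (t i) x" using t_ex[OF xA(1)] by blast
  obtain j where j: "j < k" "sp (t j) u" using t_ex[OF xA(2)] by blast
  have ti: "t i \<in> Ab" "t j \<in> Ab" "t i \<noteq> x" "t j \<noteq> u" using t_in i j assms by auto
  have nsp: "\<not> sp x (t j)"
  proof
    assume "sp x (t j)"
    then have "sp x u" using sp_trans[OF xA(1) ti(2) xA(2)] j(2) by blast
    then show False using assms(3) by simp
  qed
  have "(t i, t j) \<in> Ob"
    by (rule ord_parts[OF xA(1) ti(1) xA(2) ti(2)]) (use i j sp_sym assms in auto)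
  have "i < j"
  proof (rule ccontr)
    assume "\<not> i < j"
    moreover have "i \<noteq> j"
    proof
      assume "i = j"
      then have "sp x (t i)" "sp (t i) u" using i j sp_sym by auto
      then have "sp x u" using sp_trans[OF xA(1) ti(1) xA(2)] by blast
      then show False using assms(3) by simp
    qed
    ultimately have "j < i" by simp
    then have "(t j, t i) \<in> Ob" using tO i by auto
    then show False using \<open>(t i, t j) \<in> Ob\<close> lin_facts(1,2) by blast
  qed
  then have tt: "(t i, t j) \<in> Eb" using tE j by auto
  have "even (of_bool ((x,u)\<in>Eb) + of_bool ((x,t j)\<in>Eb) + of_bool ((t i,u)\<in>Eb) + of_bool ((t i,t j)\<in>Eb) :: nat)"
    by (rule parity4) (use xA ti i j sp_sym assms in auto)
  moreover have "(x, u) \<in> R \<longleftrightarrow> (t i, u) \<in> Eb" by (rule Rchar) (use assms i in auto)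
  moreover have "(u, x) \<in> R \<longleftrightarrow> (t j, x) \<in> Eb" by (rule Rchar) (use assms j sp_sym in auto)
  moreover have "(x, t j) \<in> Eb \<longleftrightarrow> (t j, x) \<notin> Eb" by (rule one_dir) (use xA ti nsp in auto)
  ultimately show ?thesis using tt by (cases "(x,u)\<in>Eb"; cases "(t j, x) \<in> Eb"; cases "(t i, u) \<in> Eb") auto
qed

lemma E_char:
  assumes "x \<in> A" "u \<in> A" "\<not> sp x u"
  shows "(x, u) \<in> E \<longleftrightarrow> ((x, u) \<in> Lt \<longleftrightarrow> (((x, u) \<in> R) \<noteq> ((u, x) \<in> R)))"
proof -
  have xA: "x \<in> Ab" "u \<in> Ab" using assms sub by auto
  have ne: "x \<noteq> u" using assms sp_refl by auto
  have E: "(x, u) \<in> E \<longleftrightarrow> (x, u) \<in> Eb" using Eeq assms by auto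
  show ?thesis
  proof (cases "(x, u) \<in> Ob")
    case True
    then show ?thesis using E_R_ord[OF assms True] E Lteq assms by auto
  next
    case False
    then have "(u, x) \<in> Ob" using lin_facts(3)[OF xA ne] by auto
    then have "(u, x) \<in> Eb \<longleftrightarrow> (((u, x) \<in> R) \<noteq> ((x, u) \<in> R))"
      using E_R_ord[OF assms(2,1)] assms sp_sym by blast
    moreover have "(x, u) \<in> Eb \<longleftrightarrow> (u, x) \<notin> Eb" by (rule one_dir) (use xA assms in auto)
    ultimately show ?thesis using E False Lteq by auto
  qed
qed

end


definition encv :: "nat \<Rightarrow> nat set \<Rightarrow> nat" where "encv p W = prod_encode (p, set_encode W)"
definition partof :: "nat \<Rightarrow> nat" where "partof u = fst (prod_decode u)"
definition vecof :: "nat \<Rightarrow> nat set" where "vecof u = set_decode (snd (prod_decode u))"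

lemma partof_enc[simp]: "partof (encv p W) = p" unfolding partof_def encv_def by simp
lemma vecof_enc[simp]: "finite W \<Longrightarrow> vecof (encv p W) = W" unfolding vecof_def encv_def by (simp add: set_encode_inverse)

definition Bset :: "nat \<Rightarrow> nat set" where "Bset N = (\<lambda>(p, W). encv p W) ` ({..<N} \<times> Pow {..<N})"
definition Dir :: "nat \<Rightarrow> nat set \<Rightarrow> nat \<Rightarrow> nat set \<Rightarrow> bool" where
  "Dir p W q V \<longleftrightarrow> ((p < q) = ((q \<in> W) = (p \<in> V)))"
definition Fset :: "nat \<Rightarrow> (nat \<times> nat) set" where
  "Fset N = {(u, x). u \<in> Bset N \<and> x \<in> Bset N \<and> partof u \<noteq> partof x \<and> Dir (partof u) (vecof u) (partof x) (vecof x)}"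

lemma Bset_mem: "u \<in> Bset N \<Longrightarrow> partof u < N \<and> vecof u \<subseteq> {..<N} \<and> u = encv (partof u) (vecof u)"
proof -
  assume "u \<in> Bset N"
  then obtain p W where "p < N" "W \<subseteq> {..<N}" "u = encv p W" unfolding Bset_def by auto
  moreover have "finite W" using \<open>W \<subseteq> {..<N}\<close> by (rule finite_subset) simp
  ultimately show ?thesis by simp
qed

lemma encv_in: "p < N \<Longrightarrow> W \<subseteq> {..<N} \<Longrightarrow> encv p W \<in> Bset N" unfolding Bset_def by auto

lemma B_eq: "u \<in> Bset N \<Longrightarrow> v \<in> Bset N \<Longrightarrow> partof u = partof v \<Longrightarrow> vecof u = vecof v \<Longrightarrow> u = v"
  using Bset_mem by metis

lemma Dir_swap: "p \<noteq> q \<Longrightarrow> Dir q V p W \<longleftrightarrow> \<not> Dir p W q V"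
  unfolding Dir_def by auto

lemma Fmem: "(u, x) \<in> Fset N \<longleftrightarrow> u \<in> Bset N \<and> x \<in> Bset N \<and> partof u \<noteq> partof x \<and> Dir (partof u) (vecof u) (partof x) (vecof x)"
  unfolding Fset_def by simp

lemma sp_B: "u \<in> Bset N \<Longrightarrow> v \<in> Bset N \<Longrightarrow> same_part (Fset N) u v \<longleftrightarrow> partof u = partof v"
proof -
  assume uv: "u \<in> Bset N" "v \<in> Bset N"
  show ?thesis
  proof
    assume sp: "same_part (Fset N) u v"
    show "partof u = partof v"
    proof (rule ccontr)
      assume ne: "partof u \<noteq> partof v"
      then have "u \<noteq> v" by auto
      then have "(u, v) \<notin> Fset N" "(v, u) \<notin> Fset N" using sp unfolding same_part_def by auto
      then show False using Fmem[of u v N] Fmem[of v u N] uv ne Dir_swap[OF ne] by auto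
    qed
  next
    assume "partof u = partof v"
    then show "same_part (Fset N) u v" unfolding same_part_def using Fmem by auto
  qed
qed

lemma partrel_B: "part_rel (Bset N) (Fset N) = {(u, v). u \<in> Bset N \<and> v \<in> Bset N \<and> partof u = partof v}"
  unfolding part_rel_def using sp_B by auto

lemma even_Dir:
  "even (of_bool (Dir p W1 q V1) + of_bool (Dir p W1 q V2) + of_bool (Dir p W2 q V1) + of_bool (Dir p W2 q V2) :: nat)"
  unfolding Dir_def by (cases "p < q"; cases "q \<in> W1"; cases "q \<in> W2"; cases "p \<in> V1"; cases "p \<in> V2") auto

lemma inS_B: "in_S (Bset N) (Fset N)"
proof -
  have fin: "finite (Bset N)" unfolding Bset_def by simp
  have dig: "digraph (Bset N) (Fset N)"
    unfolding digraph_def using Fmem Dir_swap by auto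
  have eqv: "equiv (Bset N) (part_rel (Bset N) (Fset N))"
    unfolding partrel_B by (rule equivI) (auto simp: refl_on_def sym_def trans_def)
  have par: "parity_ok (Bset N) (Fset N)"
    unfolding parity_ok_def
  proof (intro ballI impI)
    fix P P' u v x y
    assume P: "P \<in> parts (Bset N) (Fset N)" and P': "P' \<in> parts (Bset N) (Fset N)" and ne: "P \<noteq> P'"
      and m: "u \<in> P" "v \<in> P" "x \<in> P'" "y \<in> P'" and d: "u \<noteq> v" "x \<noteq> y"
    obtain z where z: "z \<in> Bset N" "P = {w. w \<in> Bset N \<and> partof z = partof w}"
      using P unfolding parts_def partrel_B by (auto elim!: quotientE)
    obtain z' where z': "z' \<in> Bset N" "P' = {w. w \<in> Bset N \<and> partof z' = partof w}"
      using P' unfolding parts_def partrel_B by (auto elim!: quotientE)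
    have pz: "partof z \<noteq> partof z'" using ne z z' by auto
    have mm: "u \<in> Bset N" "v \<in> Bset N" "x \<in> Bset N" "y \<in> Bset N"
      "partof u = partof z" "partof v = partof z" "partof x = partof z'" "partof y = partof z'"
      using m z z' by auto
    have "card {(a, b). a \<in> {u, v} \<and> b \<in> {x, y} \<and> (a, b) \<in> Fset N} =
      of_bool (Dir (partof z) (vecof u) (partof z') (vecof x)) + of_bool (Dir (partof z) (vecof u) (partof z') (vecof y))
      + of_bool (Dir (partof z) (vecof v) (partof z') (vecof x)) + of_bool (Dir (partof z) (vecof v) (partof z') (vecof y))"
      using card4[OF d, of "Fset N"] Fmem mm pz by simp
    then show "even (card {(a, b). a \<in> {u, v} \<and> b \<in> {x, y} \<and> (a, b) \<in> Fset N})"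
      using even_Dir by simp
  qed
  show ?thesis unfolding in_S_def complete_multipartite_def using fin dig eqv par by simp
qed


lemma div_less_imp: "(a::nat) div d < b div d \<Longrightarrow> a < b"
  by (meson div_le_mono not_le)

lemma lin_rank_props:
  fixes X :: "'a set" and r :: "'a \<Rightarrow> 'a \<Rightarrow> bool"
  assumes "finite X" "\<forall>x\<in>X. \<not> r x x" "\<forall>x\<in>X. \<forall>y\<in>X. \<forall>z\<in>X. r x y \<longrightarrow> r y z \<longrightarrow> r x z"
    "\<forall>x\<in>X. \<forall>y\<in>X. x \<noteq> y \<longrightarrow> r x y \<or> r y x"
  shows "bij_betw (\<lambda>x. card {y\<in>X. r y x}) X {..<card X}"
    "\<And>x y. x \<in> X \<Longrightarrow> y \<in> X \<Longrightarrow> r x y \<longleftrightarrow> card {z\<in>X. r z x} < card {z\<in>X. r z y}"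
    "\<And>x y. x \<in> X \<Longrightarrow> y \<in> X \<Longrightarrow> card {z\<in>X. r z x} = card {z\<in>X. r z y} \<Longrightarrow> x = y"
    "\<And>x. x \<in> X \<Longrightarrow> card {z\<in>X. r z x} < card X"
proof -
  show b: "bij_betw (\<lambda>x. card {y\<in>X. r y x}) X {..<card X}" by (rule rank_lemma(1)[OF assms])
  show "\<And>x y. x \<in> X \<Longrightarrow> y \<in> X \<Longrightarrow> r x y \<longleftrightarrow> card {z\<in>X. r z x} < card {z\<in>X. r z y}"
    by (rule rank_lemma(2)[OF assms])
  show "\<And>x y. x \<in> X \<Longrightarrow> y \<in> X \<Longrightarrow> card {z\<in>X. r z x} = card {z\<in>X. r z y} \<Longrightarrow> x = y"
    using bij_betw_imp_inj_on[OF b] unfolding inj_on_def by blast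
  show "\<And>x. x \<in> X \<Longrightarrow> card {z\<in>X. r z x} < card X"
    using bij_betw_imp_surj_on[OF b] by blast
qed


definition Xp :: "nat set \<Rightarrow> (nat \<times> nat) set \<Rightarrow> nat \<Rightarrow> nat set" where
  "Xp A E x = {y\<in>A. same_part E x y}"
definition repA :: "nat set \<Rightarrow> (nat \<times> nat) set \<Rightarrow> nat \<Rightarrow> nat" where
  "repA A E x = Min (Xp A E x)"
definition Rep :: "nat set \<Rightarrow> (nat \<times> nat) set \<Rightarrow> nat set" where
  "Rep A E = repA A E ` A"
definition rkB :: "nat \<Rightarrow> (nat \<times> nat) set \<Rightarrow> nat \<Rightarrow> nat set \<Rightarrow> nat" where
  "rkB N Lt' q W = card {W'\<in>Pow {..<N}. (encv q W', encv q W) \<in> Lt'}"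

locale emb =
  a: sstar A E R Lt Ab Eb t Ob kA + b: sstar "Bset N" "Fset N" R' Lt' Bb Fb tb Obb kB
  for A E R Lt Ab Eb t Ob kA N R' Lt' Bb Fb tb Obb kB +
  fixes e :: nat and C :: "nat set"
  assumes eA: "card A < 2^e" and eN: "e \<le> N" and CN: "C \<subseteq> {..<N}"
    and cC: "card C = card (Rep A E)"
    and shat: "\<forall>q\<in>C. \<forall>l<2^e. shatters (chunk N e (rkB N Lt' q) l) (C - {q})"
begin

lemma finA: "finite A" using a.SA by (simp add: in_S_def)

lemma spE: "x \<in> A \<Longrightarrow> y \<in> A \<Longrightarrow> same_part E x y \<longleftrightarrow> a.sp x y"
  using a.Eeq unfolding same_part_def by auto

lemma spA_trans: "x \<in> A \<Longrightarrow> y \<in> A \<Longrightarrow> z \<in> A \<Longrightarrow> a.sp x y \<Longrightarrow> a.sp y z \<Longrightarrow> a.sp x z"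
  using a.sp_trans a.sub by blast

lemma Lt_props: "(x, x) \<notin> Lt" "(x, y) \<in> Lt \<Longrightarrow> (y, z) \<in> Lt \<Longrightarrow> (x, z) \<in> Lt"
  "x \<in> A \<Longrightarrow> y \<in> A \<Longrightarrow> x \<noteq> y \<Longrightarrow> (x, y) \<in> Lt \<or> (y, x) \<in> Lt" "(x, y) \<in> Lt \<Longrightarrow> x \<in> A \<and> y \<in> A"
  using a.lin_facts a.Lteq a.sub by blast+

lemma Xp_eq: "x \<in> A \<Longrightarrow> y \<in> A \<Longrightarrow> a.sp x y \<Longrightarrow> Xp A E x = Xp A E y"
proof -
  assume xy: "x \<in> A" "y \<in> A" "a.sp x y"
  have "z \<in> Xp A E x \<longleftrightarrow> z \<in> Xp A E y" for z
  proof (cases "z \<in> A")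
    case True
    have "a.sp x z \<longleftrightarrow> a.sp y z"
      using spA_trans[OF xy(2) xy(1) True] spA_trans[OF xy(1) xy(2) True] a.sp_sym[OF xy(3)] xy(3) by blast
    then show ?thesis unfolding Xp_def using spE[OF xy(1) True] spE[OF xy(2) True] True by simp
  next
    case False then show ?thesis unfolding Xp_def by simp
  qed
  then show ?thesis by blast
qed

lemma Xp_mem: "x \<in> A \<Longrightarrow> x \<in> Xp A E x" "finite (Xp A E x)" "Xp A E x \<subseteq> A"
  unfolding Xp_def using finA by (auto simp: same_part_def)

lemma rep_props: "x \<in> A \<Longrightarrow> repA A E x \<in> A \<and> a.sp x (repA A E x)"
proof -
  assume x: "x \<in> A"
  have "repA A E x \<in> Xp A E x" unfolding repA_def using Xp_mem(1)[OF x] Xp_mem(2) by (intro Min_in) auto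
  then show ?thesis unfolding Xp_def using spE x by auto
qed

lemma rep_eq: "x \<in> A \<Longrightarrow> y \<in> A \<Longrightarrow> repA A E x = repA A E y \<longleftrightarrow> a.sp x y"
proof
  assume xy: "x \<in> A" "y \<in> A" "repA A E x = repA A E y"
  have r1: "repA A E x \<in> A" "a.sp x (repA A E x)" using rep_props[OF xy(1)] by auto
  have r2: "a.sp y (repA A E y)" using rep_props[OF xy(2)] by auto
  then have "a.sp (repA A E x) y" using xy(3) a.sp_sym by simp
  then show "a.sp x y" using spA_trans[OF xy(1) r1(1) xy(2)] r1(2) by blast
next
  assume "x \<in> A" "y \<in> A" "a.sp x y"
  then show "repA A E x = repA A E y" unfolding repA_def using Xp_eq by simp
qed

lemma Rep_sub: "Rep A E \<subseteq> A" unfolding Rep_def using rep_props by auto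

lemma Rep_fix: "r \<in> Rep A E \<Longrightarrow> repA A E r = r"
proof -
  assume "r \<in> Rep A E"
  then obtain x where x: "x \<in> A" "r = repA A E x" unfolding Rep_def by auto
  then have "r \<in> A" "a.sp x r" using rep_props by auto
  then have "repA A E r = repA A E x" using rep_eq x a.sp_sym by blast
  then show ?thesis using x by simp
qed

lemma finRep: "finite (Rep A E)" using Rep_sub finA by (rule finite_subset)

definition rankR where "rankR r = card {r'\<in>Rep A E. (r', r) \<in> Lt}"

lemma Lt_lin_on:
  assumes "X \<subseteq> A"
  shows "\<forall>x\<in>X. \<not> (x, x) \<in> Lt" "\<forall>x\<in>X. \<forall>y\<in>X. \<forall>z\<in>X. (x, y) \<in> Lt \<longrightarrow> (y, z) \<in> Lt \<longrightarrow> (x, z) \<in> Lt"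
    "\<forall>x\<in>X. \<forall>y\<in>X. x \<noteq> y \<longrightarrow> (x, y) \<in> Lt \<or> (y, x) \<in> Lt"
  using Lt_props assms by blast+

lemmas rankR_props = lin_rank_props[OF finRep Lt_lin_on[OF Rep_sub], folded rankR_def]

definition rkC where "rkC q = card {q'\<in>C. (encv q' {}, encv q {}) \<in> Lt'}"

lemma finC: "finite C" using CN by (rule finite_subset) simp

lemma encv0_B: "q \<in> C \<Longrightarrow> encv q {} \<in> Bset N" using CN by (intro encv_in) auto

lemma Lt'_props: "(x, x) \<notin> Lt'" "(x, y) \<in> Lt' \<Longrightarrow> (y, z) \<in> Lt' \<Longrightarrow> (x, z) \<in> Lt'"
  "x \<in> Bset N \<Longrightarrow> y \<in> Bset N \<Longrightarrow> x \<noteq> y \<Longrightarrow> (x, y) \<in> Lt' \<or> (y, x) \<in> Lt'"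
  "(x, y) \<in> Lt' \<Longrightarrow> x \<in> Bset N \<and> y \<in> Bset N"
  using b.lin_facts b.Lteq b.sub by blast+

lemma C_lin:
  "\<forall>x\<in>C. \<not> (encv x {}, encv x {}) \<in> Lt'"
  "\<forall>x\<in>C. \<forall>y\<in>C. \<forall>z\<in>C. (encv x {}, encv y {}) \<in> Lt' \<longrightarrow> (encv y {}, encv z {}) \<in> Lt' \<longrightarrow> (encv x {}, encv z {}) \<in> Lt'"
  "\<forall>x\<in>C. \<forall>y\<in>C. x \<noteq> y \<longrightarrow> (encv x {}, encv y {}) \<in> Lt' \<or> (encv y {}, encv x {}) \<in> Lt'"
proof -
  show "\<forall>x\<in>C. \<not> (encv x {}, encv x {}) \<in> Lt'" using Lt'_props(1) by blast
  show "\<forall>x\<in>C. \<forall>y\<in>C. \<forall>z\<in>C. (encv x {}, encv y {}) \<in> Lt' \<longrightarrow> (encv y {}, encv z {}) \<in> Lt' \<longrightarrow> (encv x {}, encv z {}) \<in> Lt'"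
    using Lt'_props(2) by blast
  show "\<forall>x\<in>C. \<forall>y\<in>C. x \<noteq> y \<longrightarrow> (encv x {}, encv y {}) \<in> Lt' \<or> (encv y {}, encv x {}) \<in> Lt'"
  proof (intro ballI impI)
    fix x y assume "x \<in> C" "y \<in> C" "x \<noteq> y"
    moreover have "encv x {} \<noteq> encv y {}" using \<open>x \<noteq> y\<close> partof_enc by metis
    ultimately show "(encv x {}, encv y {}) \<in> Lt' \<or> (encv y {}, encv x {}) \<in> Lt'"
      using Lt'_props(3) encv0_B by blast
  qed
qed

lemmas rkC_props = lin_rank_props[OF finC C_lin, folded rkC_def]

definition qf where "qf x = inv_into C rkC (rankR (repA A E x))"

lemma qf_in: "x \<in> A \<Longrightarrow> qf x \<in> C \<and> rkC (qf x) = rankR (repA A E x)"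
proof -
  assume x: "x \<in> A"
  have r: "repA A E x \<in> Rep A E" unfolding Rep_def using x by blast
  have lt: "rankR (repA A E x) \<in> rkC ` C"
    using rankR_props(4)[OF r] cC bij_betw_imp_surj_on[OF rkC_props(1)] by auto
  show ?thesis unfolding qf_def using lt by (simp add: inv_into_into f_inv_into_f)
qed

lemma qf_eq: "x \<in> A \<Longrightarrow> y \<in> A \<Longrightarrow> qf x = qf y \<longleftrightarrow> a.sp x y"
proof
  assume xy: "x \<in> A" "y \<in> A" "qf x = qf y"
  then have "rankR (repA A E x) = rankR (repA A E y)" using qf_in[OF xy(1)] qf_in[OF xy(2)] by simp
  moreover have "repA A E x \<in> Rep A E" "repA A E y \<in> Rep A E" unfolding Rep_def using xy by auto
  ultimately have "repA A E x = repA A E y" using rankR_props(3) by blast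
  then show "a.sp x y" using rep_eq xy by blast
next
  assume "x \<in> A" "y \<in> A" "a.sp x y"
  then have "repA A E x = repA A E y" using rep_eq by blast
  then show "qf x = qf y" unfolding qf_def by simp
qed

lemma qf_lt:
  assumes "x \<in> A" "y \<in> A" "\<not> a.sp x y"
  shows "(x, y) \<in> Lt \<longleftrightarrow> (encv (qf x) {}, encv (qf y) {}) \<in> Lt'"
proof -
  define rx where "rx = repA A E x"
  define ry where "ry = repA A E y"
  have r: "rx \<in> A" "a.sp x rx" "ry \<in> A" "a.sp y ry" using rep_props assms rx_def ry_def by auto
  have rR: "rx \<in> Rep A E" "ry \<in> Rep A E" unfolding Rep_def rx_def ry_def using assms by auto
  have Ab: "x \<in> Ab" "y \<in> Ab" "rx \<in> Ab" "ry \<in> Ab" using r assms a.sub by auto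
  have nsp: "\<not> a.sp rx ry"
  proof
    assume "a.sp rx ry"
    then have "a.sp rx y" using spA_trans[OF r(1) r(3) assms(2)] a.sp_sym[OF r(4)] by blast
    then have "a.sp x y" using spA_trans[OF assms(1) r(1) assms(2)] r(2) by blast
    then show False using assms(3) by simp
  qed
  have "(x, y) \<in> Lt \<longleftrightarrow> (rx, ry) \<in> Lt"
  proof
    assume "(x, y) \<in> Lt"
    then have "(x, y) \<in> Ob" using a.Lteq by auto
    then have "(rx, ry) \<in> Ob" using a.ord_parts[OF Ab(1) Ab(3) Ab(2) Ab(4) r(2) r(4) assms(3)] by blast
    then show "(rx, ry) \<in> Lt" using a.Lteq r by auto
  next
    assume "(rx, ry) \<in> Lt"
    then have "(rx, ry) \<in> Ob" using a.Lteq by auto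
    then have "(x, y) \<in> Ob" using a.ord_parts[OF Ab(3) Ab(1) Ab(4) Ab(2) a.sp_sym[OF r(2)] a.sp_sym[OF r(4)] nsp] by blast
    then show "(x, y) \<in> Lt" using a.Lteq assms by auto
  qed
  also have "\<dots> \<longleftrightarrow> rankR rx < rankR ry" using rankR_props(2)[OF rR] .
  also have "\<dots> \<longleftrightarrow> rkC (qf x) < rkC (qf y)" using qf_in assms rx_def ry_def by simp
  also have "\<dots> \<longleftrightarrow> (encv (qf x) {}, encv (qf y) {}) \<in> Lt'" using rkC_props(2) qf_in assms by blast
  finally show ?thesis .
qed

definition yq where "yq q = inv_into (Rep A E) rankR (rkC q)"

lemma yq_props: "q \<in> C \<Longrightarrow> yq q \<in> A \<and> qf (yq q) = q"
proof -
  assume q: "q \<in> C"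
  have lt: "rkC q \<in> rankR ` Rep A E"
    using rkC_props(4)[OF q] cC bij_betw_imp_surj_on[OF rankR_props(1)] by auto
  have y: "yq q \<in> Rep A E" "rankR (yq q) = rkC q" unfolding yq_def using lt by (auto simp: inv_into_into f_inv_into_f)
  have yA: "yq q \<in> A" using y Rep_sub by auto
  have "rkC (qf (yq q)) = rkC q" using qf_in[OF yA] Rep_fix[OF y(1)] y(2) by simp
  then have "qf (yq q) = q" using rkC_props(3) qf_in[OF yA] q by blast
  then show ?thesis using yA by simp
qed

end


context emb
begin

definition rP where "rP x = card {z\<in>Xp A E x. (z, x) \<in> Lt}"

lemma rP_lt: "x \<in> A \<Longrightarrow> rP x < 2^e"
proof -
  assume x: "x \<in> A"
  have "rP x < card (Xp A E x)" unfolding rP_def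
    by (rule lin_rank_props(4)[OF Xp_mem(2) Lt_lin_on[OF Xp_mem(3)] Xp_mem(1)[OF x]])
  also have "\<dots> \<le> card A" using Xp_mem(3) finA by (rule card_mono[rotated])
  finally show ?thesis using eA by simp
qed

lemma rP_same:
  assumes "x \<in> A" "y \<in> A" "a.sp x y"
  shows "(x, y) \<in> Lt \<longleftrightarrow> rP x < rP y" "rP x = rP y \<Longrightarrow> x = y"
proof -
  have X: "Xp A E y = Xp A E x" using Xp_eq[OF assms] by simp
  have m: "x \<in> Xp A E x" "y \<in> Xp A E x" using Xp_mem(1) assms X by auto
  note L = lin_rank_props[OF Xp_mem(2) Lt_lin_on[OF Xp_mem(3)], of x]
  show "(x, y) \<in> Lt \<longleftrightarrow> rP x < rP y" unfolding rP_def X using L(2)[OF m] .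
  show "rP x = rP y \<Longrightarrow> x = y" unfolding rP_def X using L(3)[OF m] .
qed

lemma encv_inj: "W \<subseteq> {..<N} \<Longrightarrow> W' \<subseteq> {..<N} \<Longrightarrow> encv q W = encv q' W' \<Longrightarrow> q = q' \<and> W = W'"
proof -
  assume a: "W \<subseteq> {..<N}" "W' \<subseteq> {..<N}" "encv q W = encv q' W'"
  have f: "finite W" "finite W'" using a by (auto intro: finite_subset)
  show ?thesis using a(3) partof_enc[of q W] partof_enc[of q' W'] vecof_enc[OF f(1), of q] vecof_enc[OF f(2), of q'] by metis
qed

lemma Pow_lin:
  assumes "q < N"
  shows "\<forall>x\<in>Pow {..<N}. \<not> (encv q x, encv q x) \<in> Lt'"
    "\<forall>x\<in>Pow {..<N}. \<forall>y\<in>Pow {..<N}. \<forall>z\<in>Pow {..<N}. (encv q x, encv q y) \<in> Lt' \<longrightarrow> (encv q y, encv q z) \<in> Lt' \<longrightarrow> (encv q x, encv q z) \<in> Lt'"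
    "\<forall>x\<in>Pow {..<N}. \<forall>y\<in>Pow {..<N}. x \<noteq> y \<longrightarrow> (encv q x, encv q y) \<in> Lt' \<or> (encv q y, encv q x) \<in> Lt'"
proof -
  show "\<forall>x\<in>Pow {..<N}. \<not> (encv q x, encv q x) \<in> Lt'" using Lt'_props(1) by blast
  show "\<forall>x\<in>Pow {..<N}. \<forall>y\<in>Pow {..<N}. \<forall>z\<in>Pow {..<N}. (encv q x, encv q y) \<in> Lt' \<longrightarrow> (encv q y, encv q z) \<in> Lt' \<longrightarrow> (encv q x, encv q z) \<in> Lt'"
    using Lt'_props(2) by blast
  show "\<forall>x\<in>Pow {..<N}. \<forall>y\<in>Pow {..<N}. x \<noteq> y \<longrightarrow> (encv q x, encv q y) \<in> Lt' \<or> (encv q y, encv q x) \<in> Lt'"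
  proof (intro ballI impI)
    fix x y assume xy: "x \<in> Pow {..<N}" "y \<in> Pow {..<N}" "x \<noteq> y"
    then have "encv q x \<noteq> encv q y" using encv_inj by blast
    moreover have "encv q x \<in> Bset N" "encv q y \<in> Bset N" using xy assms encv_in by auto
    ultimately show "(encv q x, encv q y) \<in> Lt' \<or> (encv q y, encv q x) \<in> Lt'" using Lt'_props(3) by blast
  qed
qed

lemma rkB_props:
  assumes "q < N"
  shows "bij_betw (rkB N Lt' q) (Pow {..<N}) {..<2^N}"
    "W \<subseteq> {..<N} \<Longrightarrow> W' \<subseteq> {..<N} \<Longrightarrow> (encv q W, encv q W') \<in> Lt' \<longleftrightarrow> rkB N Lt' q W < rkB N Lt' q W'"
proof -
  note L = lin_rank_props[OF finite_Pow_iff[THEN iffD2, OF finite_lessThan] Pow_lin[OF assms]]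
  have rk: "rkB N Lt' q = (\<lambda>x. card {y\<in>Pow {..<N}. (encv q y, encv q x) \<in> Lt'})" unfolding rkB_def by auto
  show "bij_betw (rkB N Lt' q) (Pow {..<N}) {..<2^N}" using L(1) unfolding rk by (simp add: card_Pow)
  show "W \<subseteq> {..<N} \<Longrightarrow> W' \<subseteq> {..<N} \<Longrightarrow> (encv q W, encv q W') \<in> Lt' \<longleftrightarrow> rkB N Lt' q W < rkB N Lt' q W'"
    unfolding rk using L(2) by simp
qed

definition Tg where "Tg x = {q\<in>C - {qf x}. ((encv q {}, encv (qf x) {q}) \<in> R') = ((yq q, x) \<in> R)}"

definition Wf where "Wf x = (SOME W. W \<in> chunk N e (rkB N Lt' (qf x)) (rP x) \<and> W \<inter> (C - {qf x}) = Tg x)"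

lemma Wf_props:
  assumes "x \<in> A"
  shows "Wf x \<subseteq> {..<N}" "rkB N Lt' (qf x) (Wf x) div 2^(N-e) = rP x" "Wf x \<inter> (C - {qf x}) = Tg x"
proof -
  have q: "qf x \<in> C" using qf_in assms by auto
  have "shatters (chunk N e (rkB N Lt' (qf x)) (rP x)) (C - {qf x})" using shat q rP_lt[OF assms] by blast
  moreover have "Tg x \<subseteq> C - {qf x}" unfolding Tg_def by auto
  ultimately have "\<exists>W. W \<in> chunk N e (rkB N Lt' (qf x)) (rP x) \<and> W \<inter> (C - {qf x}) = Tg x"
    unfolding shatters_def by blast
  then have "Wf x \<in> chunk N e (rkB N Lt' (qf x)) (rP x) \<and> Wf x \<inter> (C - {qf x}) = Tg x"
    unfolding Wf_def by (rule someI_ex)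
  then show "Wf x \<subseteq> {..<N}" "rkB N Lt' (qf x) (Wf x) div 2^(N-e) = rP x" "Wf x \<inter> (C - {qf x}) = Tg x"
    unfolding chunk_def by auto
qed

definition ff where "ff x = encv (qf x) (Wf x)"

lemma ff_props:
  assumes "x \<in> A"
  shows "ff x \<in> Bset N" "partof (ff x) = qf x" "vecof (ff x) = Wf x"
proof -
  have q: "qf x < N" using qf_in assms CN by auto
  show "ff x \<in> Bset N" unfolding ff_def using q Wf_props(1)[OF assms] by (rule encv_in)
  show "partof (ff x) = qf x" unfolding ff_def by simp
  have "finite (Wf x)" using Wf_props(1)[OF assms] by (rule finite_subset) simp
  then show "vecof (ff x) = Wf x" unfolding ff_def by simp
qed

lemma bsp: "u \<in> Bset N \<Longrightarrow> v \<in> Bset N \<Longrightarrow> b.sp u v \<longleftrightarrow> partof u = partof v"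
proof -
  assume uv: "u \<in> Bset N" "v \<in> Bset N"
  have "same_part Fb u v \<longleftrightarrow> same_part (Fset N) u v" using b.Eeq uv unfolding same_part_def by auto
  then show ?thesis using sp_B[OF uv] by simp
qed

lemma Fb_B: "u \<in> Bset N \<Longrightarrow> v \<in> Bset N \<Longrightarrow> (u, v) \<in> Fb \<longleftrightarrow> (u, v) \<in> Fset N"
  using b.Eeq by auto

lemma Rb:
  assumes "p < N" "q < N" "p \<noteq> q" "W0 \<subseteq> {..<N}" "W \<subseteq> {..<N}"
  shows "(encv p W0, encv q W) \<in> R' \<longleftrightarrow> (((encv p W0, encv q {}) \<in> R') \<noteq> (p \<in> W))"
proof -
  have B: "encv p W0 \<in> Bset N" "encv q W \<in> Bset N" "encv q {} \<in> Bset N" using assms encv_in by auto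
  have f: "finite W0" "finite W" using assms(4,5) by (auto intro: finite_subset)
  have sp1: "b.sp (encv q W) (encv q {})" using bsp[OF B(2) B(3)] by simp
  have sp2: "\<not> b.sp (encv p W0) (encv q W)" using bsp[OF B(1) B(2)] assms by simp
  have "(((encv p W0, encv q W) \<in> R') \<noteq> ((encv p W0, encv q {}) \<in> R')) =
        (((encv p W0, encv q W) \<in> Fb) \<noteq> ((encv p W0, encv q {}) \<in> Fb))"
    by (rule b.R_par[OF B(1) B(2) B(3) sp1 sp2])
  also have "\<dots> = (Dir p W0 q W \<noteq> Dir p W0 q {})"
    using Fb_B B Fmem f assms(3) by simp
  also have "\<dots> = (p \<in> W)" unfolding Dir_def by auto
  finally show ?thesis by blast
qed

lemma Rb_part:
  assumes "u \<in> Bset N" "u' \<in> Bset N" "partof u = partof u'"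
  shows "(u, v) \<in> R' \<longleftrightarrow> (u', v) \<in> R'"
  using b.R_part[OF assms(1,2)] bsp[OF assms(1,2)] assms(3) by blast

lemma V_lt:
  assumes "x \<in> A" "y \<in> A"
  shows "(x, y) \<in> Lt \<longleftrightarrow> (ff x, ff y) \<in> Lt'"
proof (cases "a.sp x y")
  case True
  have q: "qf x = qf y" using qf_eq assms True by blast
  have qN: "qf x < N" using qf_in assms CN by auto
  define d :: nat where "d = 2^(N-e)"
  have W: "Wf x \<subseteq> {..<N}" "Wf y \<subseteq> {..<N}" using Wf_props assms by auto
  have rx: "rkB N Lt' (qf x) (Wf x) div d = rP x" using Wf_props(2)[OF assms(1)] d_def by simp
  have ry: "rkB N Lt' (qf x) (Wf y) div d = rP y" using Wf_props(2)[OF assms(2)] d_def q by simp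
  have "(ff x, ff y) \<in> Lt' \<longleftrightarrow> rkB N Lt' (qf x) (Wf x) < rkB N Lt' (qf x) (Wf y)"
    unfolding ff_def q using rkB_props(2)[OF qN W] q by simp
  also have "\<dots> \<longleftrightarrow> rP x < rP y"
  proof
    assume lt: "rkB N Lt' (qf x) (Wf x) < rkB N Lt' (qf x) (Wf y)"
    show "rP x < rP y"
    proof (rule ccontr)
      assume "\<not> rP x < rP y"
      then have "rP y < rP x \<or> rP x = rP y" by auto
      then show False
      proof
        assume "rP y < rP x"
        then have "rkB N Lt' (qf x) (Wf y) < rkB N Lt' (qf x) (Wf x)" using rx ry div_less_imp by metis
        then show False using lt by simp
      next
        assume "rP x = rP y"
        then have "x = y" using rP_same(2)[OF assms True] by simp
        then show False using lt by simp
      qed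
    qed
  next
    assume "rP x < rP y"
    then show "rkB N Lt' (qf x) (Wf x) < rkB N Lt' (qf x) (Wf y)" using rx ry div_less_imp by metis
  qed
  also have "\<dots> \<longleftrightarrow> (x, y) \<in> Lt" using rP_same(1)[OF assms True] by simp
  finally show ?thesis by simp
next
  case False
  have Bx: "ff x \<in> Bset N" "ff y \<in> Bset N" "encv (qf x) {} \<in> Bset N" "encv (qf y) {} \<in> Bset N"
    using ff_props assms encv0_B qf_in by auto
  have s1: "b.sp (ff x) (encv (qf x) {})" "b.sp (ff y) (encv (qf y) {})" using bsp Bx ff_props assms by auto
  have ne: "qf x \<noteq> qf y" using qf_eq assms False by blast
  have n1: "\<not> b.sp (ff x) (ff y)" using bsp Bx ff_props assms ne by auto
  have n2: "\<not> b.sp (encv (qf x) {}) (encv (qf y) {})" using bsp Bx ne by auto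
  have BB: "ff x \<in> Bb" "ff y \<in> Bb" "encv (qf x) {} \<in> Bb" "encv (qf y) {} \<in> Bb" using Bx b.sub by auto
  have "(encv (qf x) {}, encv (qf y) {}) \<in> Lt' \<longleftrightarrow> (ff x, ff y) \<in> Lt'"
  proof
    assume "(encv (qf x) {}, encv (qf y) {}) \<in> Lt'"
    then have "(encv (qf x) {}, encv (qf y) {}) \<in> Obb" using b.Lteq by auto
    then have "(ff x, ff y) \<in> Obb"
      using b.ord_parts[OF BB(3) BB(1) BB(4) BB(2) b.sp_sym[OF s1(1)] b.sp_sym[OF s1(2)] n2] by blast
    then show "(ff x, ff y) \<in> Lt'" using b.Lteq Bx by auto
  next
    assume "(ff x, ff y) \<in> Lt'"
    then have "(ff x, ff y) \<in> Obb" using b.Lteq by auto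
    then have "(encv (qf x) {}, encv (qf y) {}) \<in> Obb"
      using b.ord_parts[OF BB(1) BB(3) BB(2) BB(4) s1(1) s1(2) n1] by blast
    then show "(encv (qf x) {}, encv (qf y) {}) \<in> Lt'" using b.Lteq Bx by auto
  qed
  then show ?thesis using qf_lt[OF assms False] by simp
qed

lemma V_R:
  assumes "x \<in> A" "y \<in> A"
  shows "(x, y) \<in> R \<longleftrightarrow> (ff x, ff y) \<in> R'"
proof (cases "a.sp x y")
  case True
  have "(x, y) \<notin> R" using a.Rsp True by blast
  moreover have "b.sp (ff x) (ff y)" using bsp ff_props assms qf_eq True by auto
  then have "(ff x, ff y) \<notin> R'" using b.Rsp by blast
  ultimately show ?thesis by simp
next
  case False
  define qx where "qx = qf x"
  define qy where "qy = qf y"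
  have q: "qx \<in> C" "qy \<in> C" "qx \<noteq> qy" using qf_in qf_eq assms False qx_def qy_def by auto
  have qN: "qx < N" "qy < N" using q CN by auto
  have W: "Wf y \<subseteq> {..<N}" using Wf_props(1)[OF assms(2)] .
  have B: "ff x \<in> Bset N" "encv qx {} \<in> Bset N" using ff_props assms encv0_B q by auto
  have "(ff x, ff y) \<in> R' \<longleftrightarrow> (encv qx {}, ff y) \<in> R'"
    using Rb_part[OF B] ff_props assms qx_def by simp
  also have "\<dots> \<longleftrightarrow> (((encv qx {}, encv qy {}) \<in> R') \<noteq> (qx \<in> Wf y))"
    unfolding ff_def qy_def[symmetric] using Rb[OF qN(1) qN(2) q(3) _ W] by simp
  also have "(qx \<in> Wf y) \<longleftrightarrow> qx \<in> Tg y" using Wf_props(3)[OF assms(2)] q qy_def by blast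
  also have "\<dots> \<longleftrightarrow> (((encv qx {}, encv qy {qx}) \<in> R') = ((yq qx, y) \<in> R))"
    unfolding Tg_def using q qy_def by auto
  also have "((encv qx {}, encv qy {qx}) \<in> R') \<longleftrightarrow> \<not> ((encv qx {}, encv qy {}) \<in> R')"
    using Rb[OF qN(1) qN(2) q(3), of "{}" "{qx}"] qN by auto
  also have "((yq qx, y) \<in> R) \<longleftrightarrow> ((x, y) \<in> R)"
  proof -
    have yA: "yq qx \<in> A" "qf (yq qx) = qx" using yq_props q by auto
    have "a.sp (yq qx) x" using qf_eq[OF yA(1) assms(1)] yA qx_def by simp
    then show ?thesis using a.R_part[OF yA(1) assms(1)] by blast
  qed
  finally show ?thesis by blast
qed

lemma V_E:
  assumes "x \<in> A" "y \<in> A"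
  shows "(x, y) \<in> E \<longleftrightarrow> (ff x, ff y) \<in> Fset N"
proof (cases "a.sp x y")
  case True
  have "(x, y) \<notin> E"
  proof
    assume "(x, y) \<in> E"
    then have "(x, y) \<in> Eb" using a.Eeq by auto
    then show False using True a.dig(2) unfolding same_part_def by auto
  qed
  moreover have "(ff x, ff y) \<notin> Fset N" using Fmem ff_props assms qf_eq True by auto
  ultimately show ?thesis by simp
next
  case False
  have B: "ff x \<in> Bset N" "ff y \<in> Bset N" using ff_props assms by auto
  have nb: "\<not> b.sp (ff x) (ff y)" using bsp[OF B] ff_props assms qf_eq False by auto
  have "(ff x, ff y) \<in> Fset N \<longleftrightarrow> ((ff x, ff y) \<in> Lt' \<longleftrightarrow> (((ff x, ff y) \<in> R') \<noteq> ((ff y, ff x) \<in> R')))"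
    by (rule b.E_char[OF B nb])
  moreover have "(x, y) \<in> E \<longleftrightarrow> ((x, y) \<in> Lt \<longleftrightarrow> (((x, y) \<in> R) \<noteq> ((y, x) \<in> R)))"
    by (rule a.E_char[OF assms False])
  ultimately show ?thesis using V_lt[OF assms] V_R[OF assms] V_R[OF assms(2,1)] by simp
qed

lemma V_inj: "inj_on ff A"
proof (rule inj_onI)
  fix x y assume xy: "x \<in> A" "y \<in> A" "ff x = ff y"
  then have q: "qf x = qf y" using ff_props by metis
  then have sp: "a.sp x y" using qf_eq xy by blast
  have "Wf x = Wf y" using xy ff_props by metis
  then have "rP x = rP y" using Wf_props(2)[OF xy(1)] Wf_props(2)[OF xy(2)] q by metis
  then show "x = y" using rP_same(2)[OF xy(1,2) sp] by simp
qed

lemma embeds: "embeds_star A E R Lt (Bset N) (Fset N) R' Lt'"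
  unfolding embeds_star_def
proof (intro exI[of _ ff] conjI ballI)
  show "ff ` A \<subseteq> Bset N" using ff_props by auto
  show "inj_on ff A" by (rule V_inj)
  fix x y assume "x \<in> A" "y \<in> A"
  then show "((x, y) \<in> E) = ((ff x, ff y) \<in> Fset N)" "((x, y) \<in> R) = ((ff x, ff y) \<in> R')"
    "((x, y) \<in> Lt) = ((ff x, ff y) \<in> Lt')" using V_E V_R V_lt by auto
qed

end


lemma rkB_bij:
  assumes XB: "sstar (Bset N) (Fset N) R' Lt' Bb Fb tb Obb kB" and q: "q < N"
  shows "bij_betw (rkB N Lt' q) (Pow {..<N}) {..<2^N}"
proof -
  interpret b: sstar "Bset N" "Fset N" R' Lt' Bb Fb tb Obb kB by (rule XB)
  have L1: "(x, x) \<notin> Lt'" "(x, y) \<in> Lt' \<Longrightarrow> (y, z) \<in> Lt' \<Longrightarrow> (x, z) \<in> Lt'"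
    "x \<in> Bset N \<Longrightarrow> y \<in> Bset N \<Longrightarrow> x \<noteq> y \<Longrightarrow> (x, y) \<in> Lt' \<or> (y, x) \<in> Lt'" for x y z
    using b.lin_facts b.Lteq b.sub by blast+
  have inj: "encv q W \<noteq> encv q W'" if "W \<subseteq> {..<N}" "W' \<subseteq> {..<N}" "W \<noteq> W'" for W W'
  proof
    assume "encv q W = encv q W'"
    moreover have "finite W" "finite W'" using that by (auto intro: finite_subset)
    ultimately show False using that vecof_enc by metis
  qed
  have a1: "\<forall>x\<in>Pow {..<N}. \<not> (encv q x, encv q x) \<in> Lt'" using L1(1) by blast
  have a2: "\<forall>x\<in>Pow {..<N}. \<forall>y\<in>Pow {..<N}. \<forall>z\<in>Pow {..<N}. (encv q x, encv q y) \<in> Lt' \<longrightarrow> (encv q y, encv q z) \<in> Lt' \<longrightarrow> (encv q x, encv q z) \<in> Lt'"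
    using L1(2) by blast
  have a3: "\<forall>x\<in>Pow {..<N}. \<forall>y\<in>Pow {..<N}. x \<noteq> y \<longrightarrow> (encv q x, encv q y) \<in> Lt' \<or> (encv q y, encv q x) \<in> Lt'"
  proof (intro ballI impI)
    fix x y assume xy: "x \<in> Pow {..<N}" "y \<in> Pow {..<N}" "x \<noteq> y"
    then have "encv q x \<noteq> encv q y" using inj by blast
    moreover have "encv q x \<in> Bset N" "encv q y \<in> Bset N" using xy q encv_in by auto
    ultimately show "(encv q x, encv q y) \<in> Lt' \<or> (encv q y, encv q x) \<in> Lt'" using L1(3) by blast
  qed
  note L = lin_rank_props[OF finite_Pow_iff[THEN iffD2, OF finite_lessThan] a1 a2 a3]
  have rk: "rkB N Lt' q = (\<lambda>x. card {y\<in>Pow {..<N}. (encv q y, encv q x) \<in> Lt'})" unfolding rkB_def by auto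
  show ?thesis using L(1) unfolding rk by (simp add: card_Pow)
qed

theorem mainTheorem20:
  shows "Sstar_expansion_property"
  unfolding Sstar_expansion_property_def
proof (intro allI impI)
  fix A E assume SAE: "in_S A E"
  define e where "e = card A"
  define kk where "kk = card (Rep A E)"
  obtain N where eN: "e \<le> N" and cr: "\<forall>rk. (\<forall>q<N. bij_betw (rk q) (Pow {..<N}) {..<2^N}) \<longrightarrow>
     (\<exists>C. C \<subseteq> {..<N} \<and> card C = kk \<and> (\<forall>q\<in>C. \<forall>l<2^e. shatters (chunk N e (rk q) l) (C - {q})))"
    using core[of e kk] by blast
  show "\<exists>B F. in_S B F \<and> (\<forall>R Lt R' Lt'. in_Sstar A E R Lt \<longrightarrow> in_Sstar B F R' Lt' \<longrightarrow> embeds_star A E R Lt B F R' Lt')"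
  proof (intro exI[of _ "Bset N"] exI[of _ "Fset N"] conjI allI impI)
    show "in_S (Bset N) (Fset N)" by (rule inS_B)
    fix R Lt R' Lt' assume SA: "in_Sstar A E R Lt" and SB: "in_Sstar (Bset N) (Fset N) R' Lt'"
    obtain Ab Eb t Ob where XA: "sstar A E R Lt Ab Eb t Ob (card (parts A E))"
      using in_Sstar_sstar[OF SA] by blast
    obtain Bb Fb tb Obb where XB: "sstar (Bset N) (Fset N) R' Lt' Bb Fb tb Obb (card (parts (Bset N) (Fset N)))"
      using in_Sstar_sstar[OF SB] by blast
    have "\<forall>q<N. bij_betw (rkB N Lt' q) (Pow {..<N}) {..<2^N}" using rkB_bij[OF XB] by blast
    then obtain C where C: "C \<subseteq> {..<N}" "card C = kk" "\<forall>q\<in>C. \<forall>l<2^e. shatters (chunk N e (rkB N Lt' q) l) (C - {q})"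
      using cr by blast
    have ax: "emb_axioms A E N Lt' e C"
      unfolding emb_axioms_def using C eN e_def kk_def by simp
    interpret emb A E R Lt Ab Eb t Ob "card (parts A E)" N R' Lt' Bb Fb tb Obb "card (parts (Bset N) (Fset N))" e C
      by (rule emb.intro[OF XA XB ax])
    show "embeds_star A E R Lt (Bset N) (Fset N) R' Lt'" by (rule embeds)
  qed
qed


end
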